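(* $\mathbf{V}_{\mathcal{D}}=\mathbf{V}_{\mathcal{L}}\vee\mathbf{V}_{\mathcal{R}}$, the join being taken in the lattice of subvarieties of the variety of idempotent semirings.
   Context: An idempotent semiring is an algebra $(S,+,\cdot)$ with $(S,+)$, $(S,\cdot)$ bands and both distributive laws; addition not assumed commutative. $\mathbf{V}_{\mathcal{D}}$, $\mathbf{V}_{\mathcal{L}}$, $\mathbf{V}_{\mathcal{R}}$ denote the varieties of idempotent semirings satisfying $x\approx xyx+x+xyx$, $x\approx xy+x+xy$, $x\approx yx+x+yx$ respectively (equivalently, those on which the Green's relation $\mathcal{D}^{\bullet}$, resp. $\mathcal{L}^{\bullet}$, $\mathcal{R}^{\bullet}$, is the least distributive lattice congruence). The join of two varieties is the smallest variety containing both. *)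

theory Defs
  imports Main
begin

datatype sterm = Var nat | Add sterm sterm | Mul sterm sterm

fun eval :: "('a \<Rightarrow> 'a \<Rightarrow> 'a) \<Rightarrow> ('a \<Rightarrow> 'a \<Rightarrow> 'a) \<Rightarrow> (nat \<Rightarrow> 'a) \<Rightarrow> sterm \<Rightarrow> 'a" where
  "eval p m v (Var i) = v i"
| "eval p m v (Add s t) = p (eval p m v s) (eval p m v t)"
| "eval p m v (Mul s t) = m (eval p m v s) (eval p m v t)"

type_synonym 'a alg = "'a set \<times> ('a \<Rightarrow> 'a \<Rightarrow> 'a) \<times> ('a \<Rightarrow> 'a \<Rightarrow> 'a)"

definition alg_closed :: "'a alg \<Rightarrow> bool" where
  "alg_closed S \<longleftrightarrow> (case S of (A, p, m) \<Rightarrow>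
     (\<forall>x\<in>A. \<forall>y\<in>A. p x y \<in> A \<and> m x y \<in> A))"

definition sat :: "'a alg \<Rightarrow> sterm \<times> sterm \<Rightarrow> bool" where
  "sat S e \<longleftrightarrow> (case S of (A, p, m) \<Rightarrow>
     (\<forall>v. (\<forall>i. v i \<in> A) \<longrightarrow> eval p m v (fst e) = eval p m v (snd e)))"

text \<open>Idempotent semiring: (S,+) and (S,*) bands, both distributive laws;
  addition not assumed commutative.\<close>
definition idem_semiring :: "'a alg \<Rightarrow> bool" where
  "idem_semiring S \<longleftrightarrow> alg_closed S \<and> (case S of (A, p, m) \<Rightarrow>
     (\<forall>x\<in>A. \<forall>y\<in>A. \<forall>z\<in>A.
        p (p x y) z = p x (p y z) \<and> m (m x y) z = m x (m y z) \<and>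
        p x x = x \<and> m x x = x \<and>
        m x (p y z) = p (m x y) (m x z) \<and> m (p x y) z = p (m x z) (m y z)))"

definition VD :: "'a alg \<Rightarrow> bool" where
  "VD S \<longleftrightarrow> idem_semiring S \<and> (case S of (A, p, m) \<Rightarrow>
     (\<forall>x\<in>A. \<forall>y\<in>A. x = p (p (m (m x y) x) x) (m (m x y) x)))"

definition VL :: "'a alg \<Rightarrow> bool" where
  "VL S \<longleftrightarrow> idem_semiring S \<and> (case S of (A, p, m) \<Rightarrow>
     (\<forall>x\<in>A. \<forall>y\<in>A. x = p (p (m x y) x) (m x y)))"

definition VR :: "'a alg \<Rightarrow> bool" where
  "VR S \<longleftrightarrow> idem_semiring S \<and> (case S of (A, p, m) \<Rightarrow>
     (\<forall>x\<in>A. \<forall>y\<in>A. x = p (p (m y x) x) (m y x)))"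

text \<open>Equational theory of a class of algebras, computed over algebras whose
  carrier is a subset of nat (this suffices, since relatively free algebras
  on countably many generators are countable).\<close>
definition eq_theory :: "(nat alg \<Rightarrow> bool) \<Rightarrow> (sterm \<times> sterm) set" where
  "eq_theory K = {e. \<forall>S. K S \<longrightarrow> sat S e}"

text \<open>Join of two varieties: the variety defined by the common identities,
  i.e. the smallest variety containing both.\<close>
definition join_variety :: "(nat alg \<Rightarrow> bool) \<Rightarrow> (nat alg \<Rightarrow> bool) \<Rightarrow> 'a alg \<Rightarrow> bool" where
  "join_variety K1 K2 S \<longleftrightarrow> alg_closed S \<and> (\<forall>e \<in> eq_theory K1 \<inter> eq_theory K2. sat S e)"

end

theory Submission
  imports Defs "HOL-Library.Countable" "HOL-Library.Countable_Set"
begin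

locale vdloc = fixes A :: "'a set" and p m :: "'a \<Rightarrow> 'a \<Rightarrow> 'a"
  assumes cp: "x\<in>A \<Longrightarrow> y\<in>A \<Longrightarrow> p x y \<in> A"
  and cm: "x\<in>A \<Longrightarrow> y\<in>A \<Longrightarrow> m x y \<in> A"
  and pa: "x\<in>A \<Longrightarrow> y\<in>A \<Longrightarrow> z\<in>A \<Longrightarrow> p (p x y) z = p x (p y z)"
  and ma: "x\<in>A \<Longrightarrow> y\<in>A \<Longrightarrow> z\<in>A \<Longrightarrow> m (m x y) z = m x (m y z)"
  and pi: "x\<in>A \<Longrightarrow> p x x = x"
  and mi: "x\<in>A \<Longrightarrow> m x x = x"
  and dl: "x\<in>A \<Longrightarrow> y\<in>A \<Longrightarrow> z\<in>A \<Longrightarrow> m x (p y z) = p (m x y) (m x z)"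
  and dr: "x\<in>A \<Longrightarrow> y\<in>A \<Longrightarrow> z\<in>A \<Longrightarrow> m (p x y) z = p (m x z) (m y z)"
  and vd: "x\<in>A \<Longrightarrow> y\<in>A \<Longrightarrow> x = p (p (m (m x y) x) x) (m (m x y) x)"
begin
context fixes a b c assumes ina: "a\<in>A" and inb: "b\<in>A" and inc: "c\<in>A" and h1: "m a b = b" and h2: "m b a = a"
begin
lemma c1_f23: "\<And>x0 x1. x0\<in>A \<Longrightarrow> x1\<in>A \<Longrightarrow> (p (p (m x0 (m x1 x0)) x0) (m x0 (m x1 x0))) = x0"
  by (metis ma vd cp cm ina inb inc)
lemma c1_f39: "\<And>x0 x1. x0\<in>A \<Longrightarrow> x1\<in>A \<Longrightarrow> (m x0 x1) = (m x0 (m x0 x1))"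
  by (metis ma mi cp cm ina inb inc)
lemma c1_f41: "\<And>x6. x6\<in>A \<Longrightarrow> (m b x6) = (m a (m b x6))"
  by (metis h1 ma cp cm ina inb inc)
lemma c1_f50: "\<And>x3 x4 x5. x3\<in>A \<Longrightarrow> x4\<in>A \<Longrightarrow> x5\<in>A \<Longrightarrow> (m x3 (m x4 x5)) = (m (m x3 x4) (m x3 (m x4 x5)))"
  by (metis c1_f39 ma cp cm ina inb inc)
lemma c1_f129: "\<And>x0 x1. x0\<in>A \<Longrightarrow> x1\<in>A \<Longrightarrow> (m x0 (p x0 x1)) = (p x0 (m x0 x1))"
  by (metis dl mi cp cm ina inb inc)
lemma c1_f138: "\<And>x2 x3 x4. x2\<in>A \<Longrightarrow> x3\<in>A \<Longrightarrow> x4\<in>A \<Longrightarrow> (m x2 (p x4 (m x2 x3))) = (p (m x2 x4) (m x2 x3))"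
  by (metis c1_f39 dl cp cm ina inb inc)
lemma c1_f154: "\<And>x2 x3 x4. x2\<in>A \<Longrightarrow> x3\<in>A \<Longrightarrow> x4\<in>A \<Longrightarrow> (m x2 (p x4 (m x2 x3))) = (m x2 (p x4 x3))"
  by (metis c1_f138 dl cp cm ina inb inc)
lemma c1_f283: "\<And>x0 x1. x0\<in>A \<Longrightarrow> x1\<in>A \<Longrightarrow> (p x0 (m x1 x0)) = (m (p x0 x1) x0)"
  by (metis dr mi cp cm ina inb inc)
lemma c1_f288: "\<And>x16 x14 x17 x15. x16\<in>A \<Longrightarrow> x14\<in>A \<Longrightarrow> x17\<in>A \<Longrightarrow> x15\<in>A \<Longrightarrow> (m (p (m x14 x15) x17) x16) = (p (m x14 (m x15 x16)) (m x17 x16))"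
  by (metis dr ma cp cm ina inb inc)
lemma c1_f293: "\<And>x25. x25\<in>A \<Longrightarrow> (m (p b x25) a) = (p a (m x25 a))"
  by (metis dr h2 cp cm ina inb inc)
lemma c1_f297: "\<And>x0 x1. x0\<in>A \<Longrightarrow> x1\<in>A \<Longrightarrow> (m (p x1 x0) x0) = (p (m x1 x0) x0)"
  by (metis dr mi cp cm ina inb inc)
lemma c1_f302: "\<And>x16 x14 x17 x15. x16\<in>A \<Longrightarrow> x14\<in>A \<Longrightarrow> x17\<in>A \<Longrightarrow> x15\<in>A \<Longrightarrow> (m (p x17 (m x14 x15)) x16) = (p (m x17 x16) (m x14 (m x15 x16)))"
  by (metis dr ma cp cm ina inb inc)
lemma c1_f303: "\<And>x18. x18\<in>A \<Longrightarrow> (m (p x18 a) b) = (p (m x18 b) b)"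
  by (metis dr h1 cp cm ina inb inc)
lemma c1_f478: "\<And>x10 x9. x10\<in>A \<Longrightarrow> x9\<in>A \<Longrightarrow> (p (p (m x9 (m x10 x9)) x9) (m (p (m x9 (m x10 x9)) x9) (m x9 (m x10 x9)))) = (m (p (m x9 (m x10 x9)) x9) x9)"
  by (metis c1_f129 c1_f23 cp cm ina inb inc)
lemma c1_f516: "\<And>x10 x9. x10\<in>A \<Longrightarrow> x9\<in>A \<Longrightarrow> (p (p (m x9 (m x10 x9)) x9) (m (p (m x9 (m x10 x9)) x9) (m x9 (m x10 x9)))) = (p (m (m x9 (m x10 x9)) x9) x9)"
  by (metis c1_f297 c1_f478 cp cm ina inb inc)
lemma c1_f517: "\<And>x10 x9. x10\<in>A \<Longrightarrow> x9\<in>A \<Longrightarrow> (p (p (m x9 (m x10 x9)) x9) (m (p (m x9 (m x10 x9)) x9) (m x9 (m x10 x9)))) = (p (m x9 (m (m x10 x9) x9)) x9)"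
  by (metis c1_f516 ma cp cm ina inb inc)
lemma c1_f518: "\<And>x10 x9. x10\<in>A \<Longrightarrow> x9\<in>A \<Longrightarrow> (p (p (m x9 (m x10 x9)) x9) (m (p (m x9 (m x10 x9)) x9) (m x9 (m x10 x9)))) = (p (m x9 (m x10 (m x9 x9))) x9)"
  by (metis c1_f517 ma cp cm ina inb inc)
lemma c1_f519: "\<And>x10 x9. x10\<in>A \<Longrightarrow> x9\<in>A \<Longrightarrow> (p (m x9 (m x10 x9)) x9) = (p (p (m x9 (m x10 x9)) x9) (m (p (m x9 (m x10 x9)) x9) (m x9 (m x10 x9))))"
  by (metis c1_f518 mi cp cm ina inb inc)
lemma c1_f520: "\<And>x10 x9. x10\<in>A \<Longrightarrow> x9\<in>A \<Longrightarrow> (p (m x9 (m x10 x9)) x9) = (p (p (m x9 (m x10 x9)) x9) (p (m x9 (m x10 x9)) (m x9 (m x9 (m x10 x9)))))"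
  by (metis c1_f283 c1_f519 cp cm ina inb inc)
lemma c1_f521: "\<And>x10 x9. x10\<in>A \<Longrightarrow> x9\<in>A \<Longrightarrow> (p (m x9 (m x10 x9)) x9) = (p (p (m x9 (m x10 x9)) x9) (m x9 (p (m x10 x9) (m x9 (m x10 x9)))))"
  by (metis c1_f520 dl cp cm ina inb inc)
lemma c1_f522: "\<And>x10 x9. x10\<in>A \<Longrightarrow> x9\<in>A \<Longrightarrow> (p (m x9 (m x10 x9)) x9) = (p (p (m x9 (m x10 x9)) x9) (m x9 (p (m x10 x9) (m x10 x9))))"
  by (metis c1_f154 c1_f521 cp cm ina inb inc)
lemma c1_f523: "\<And>x10 x9. x10\<in>A \<Longrightarrow> x9\<in>A \<Longrightarrow> (p (m x9 (m x10 x9)) x9) = (p (p (m x9 (m x10 x9)) x9) (m x9 (m x10 x9)))"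
  by (metis c1_f522 pi cp cm ina inb inc)
lemma c1_f524: "\<And>x10 x9. x10\<in>A \<Longrightarrow> x9\<in>A \<Longrightarrow> (p (m x9 (m x10 x9)) x9) = x9"
  by (metis c1_f23 c1_f523 cp cm ina inb inc)
lemma c1_f530: "\<And>x0 x1. x0\<in>A \<Longrightarrow> x1\<in>A \<Longrightarrow> (p x0 (m x0 (m x1 x0))) = x0"
  by (metis c1_f23 c1_f524 cp cm ina inb inc)
lemma c1_f599: "\<And>x20. x20\<in>A \<Longrightarrow> (m b a) = (p a (m (m b (m x20 b)) a))"
  by (metis c1_f293 c1_f530 cp cm ina inb inc)
lemma c1_f635: "\<And>x20. x20\<in>A \<Longrightarrow> (m b a) = (p a (m b (m (m x20 b) a)))"
  by (metis c1_f599 ma cp cm ina inb inc)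
lemma c1_f636: "\<And>x20. x20\<in>A \<Longrightarrow> (m b a) = (p a (m b (m x20 (m b a))))"
  by (metis c1_f635 ma cp cm ina inb inc)
lemma c1_f637: "\<And>x20. x20\<in>A \<Longrightarrow> a = (p a (m b (m x20 a)))"
  by (metis c1_f636 h2 cp cm ina inb inc)
lemma c1_f670: "\<And>x15. x15\<in>A \<Longrightarrow> (m a b) = (p (m (m a (m x15 a)) b) b)"
  by (metis c1_f303 c1_f524 cp cm ina inb inc)
lemma c1_f710: "\<And>x15. x15\<in>A \<Longrightarrow> (m a b) = (p (m a (m (m x15 a) b)) b)"
  by (metis c1_f670 ma cp cm ina inb inc)
lemma c1_f711: "\<And>x15. x15\<in>A \<Longrightarrow> (m a b) = (p (m a (m x15 (m a b))) b)"
  by (metis c1_f710 ma cp cm ina inb inc)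
lemma c1_f712: "\<And>x15. x15\<in>A \<Longrightarrow> b = (p (m a (m x15 b)) b)"
  by (metis c1_f711 h1 cp cm ina inb inc)
lemma c1_f3588: "\<And>x2 x0 x1. x2\<in>A \<Longrightarrow> x0\<in>A \<Longrightarrow> x1\<in>A \<Longrightarrow> (m (p (m x1 x0) x2) x0) = (p (m x1 x0) (m x2 x0))"
  by (metis c1_f288 mi cp cm ina inb inc)
lemma c1_f3610: "\<And>x88 x89. x88\<in>A \<Longrightarrow> x89\<in>A \<Longrightarrow> (m (p (m x88 a) x89) b) = (p (m x88 b) (m x89 b))"
  by (metis c1_f288 h1 cp cm ina inb inc)
lemma c1_f3620: "\<And>x118 x119. x118\<in>A \<Longrightarrow> x119\<in>A \<Longrightarrow> (m (p (m x118 b) x119) a) = (p (m x118 a) (m x119 a))"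
  by (metis c1_f288 h2 cp cm ina inb inc)
lemma c1_f3699: "\<And>x2 x0 x1. x2\<in>A \<Longrightarrow> x0\<in>A \<Longrightarrow> x1\<in>A \<Longrightarrow> (m (p (m x1 x0) x2) x0) = (m (p x1 x2) x0)"
  by (metis c1_f3588 dr cp cm ina inb inc)
lemma c1_f3706: "\<And>x88 x89. x88\<in>A \<Longrightarrow> x89\<in>A \<Longrightarrow> (m (p (m x88 a) x89) b) = (m (p x88 x89) b)"
  by (metis c1_f3610 dr cp cm ina inb inc)
lemma c1_f3709: "\<And>x118 x119. x118\<in>A \<Longrightarrow> x119\<in>A \<Longrightarrow> (m (p (m x118 b) x119) a) = (m (p x118 x119) a)"
  by (metis c1_f3620 dr cp cm ina inb inc)
lemma c1_f5118: "\<And>x2 x0 x1. x2\<in>A \<Longrightarrow> x0\<in>A \<Longrightarrow> x1\<in>A \<Longrightarrow> (p (m x1 x0) (m x2 x0)) = (m (p x1 (m x2 x0)) x0)"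
  by (metis c1_f302 mi cp cm ina inb inc)
lemma c1_f5218: "\<And>x2 x0 x1. x2\<in>A \<Longrightarrow> x0\<in>A \<Longrightarrow> x1\<in>A \<Longrightarrow> (m (p x1 x2) x0) = (m (p x1 (m x2 x0)) x0)"
  by (metis c1_f5118 dr cp cm ina inb inc)
lemma c1_f6803: "\<And>x8 x6 x9 x7. x8\<in>A \<Longrightarrow> x6\<in>A \<Longrightarrow> x9\<in>A \<Longrightarrow> x7\<in>A \<Longrightarrow> (m (p x6 (m x8 (m x9 x7))) x7) = (m (m (p x6 (m x8 x9)) x7) x7)"
  by (metis c1_f302 c1_f3699 cp cm ina inb inc)
lemma c1_f6808: "\<And>x23. x23\<in>A \<Longrightarrow> (m b (m x23 b)) = (m (p a b) (m x23 b))"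
  by (metis c1_f3699 c1_f712 cp cm ina inb inc)
lemma c1_f6966: "\<And>x8 x6 x9 x7. x8\<in>A \<Longrightarrow> x6\<in>A \<Longrightarrow> x9\<in>A \<Longrightarrow> x7\<in>A \<Longrightarrow> (m (p x6 (m x8 (m x9 x7))) x7) = (m (p x6 (m x8 x9)) (m x7 x7))"
  by (metis c1_f6803 ma cp cm ina inb inc)
lemma c1_f6967: "\<And>x8 x6 x9 x7. x8\<in>A \<Longrightarrow> x6\<in>A \<Longrightarrow> x9\<in>A \<Longrightarrow> x7\<in>A \<Longrightarrow> (m (p x6 (m x8 x9)) x7) = (m (p x6 (m x8 (m x9 x7))) x7)"
  by (metis c1_f6966 mi cp cm ina inb inc)
lemma c1_f9660: "\<And>x15. x15\<in>A \<Longrightarrow> (m (m x15 a) b) = (m (p x15 (m x15 a)) b)"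
  by (metis c1_f3706 pi cp cm ina inb inc)
lemma c1_f9760: "\<And>x15. x15\<in>A \<Longrightarrow> (m x15 (m a b)) = (m (p x15 (m x15 a)) b)"
  by (metis c1_f9660 ma cp cm ina inb inc)
lemma c1_f9761: "\<And>x15. x15\<in>A \<Longrightarrow> (m x15 b) = (m (p x15 (m x15 a)) b)"
  by (metis c1_f9760 h1 cp cm ina inb inc)
lemma c1_f9833: "\<And>x3 x4. x3\<in>A \<Longrightarrow> x4\<in>A \<Longrightarrow> (m (m x3 (m x4 a)) b) = (m (m (p (m x3 x4) (m x3 (m x4 a))) a) b)"
  by (metis c1_f288 c1_f9761 cp cm ina inb inc)
lemma c1_f9919: "\<And>x3 x4. x3\<in>A \<Longrightarrow> x4\<in>A \<Longrightarrow> (m (m x3 (m x4 a)) b) = (m (m (p (m x3 x4) (m x3 x4)) a) b)"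
  by (metis c1_f6967 c1_f9833 cp cm ina inb inc)
lemma c1_f9920: "\<And>x3 x4. x3\<in>A \<Longrightarrow> x4\<in>A \<Longrightarrow> (m (m x3 (m x4 a)) b) = (m (m (m x3 x4) a) b)"
  by (metis c1_f9919 pi cp cm ina inb inc)
lemma c1_f9921: "\<And>x3 x4. x3\<in>A \<Longrightarrow> x4\<in>A \<Longrightarrow> (m (m x3 (m x4 a)) b) = (m (m x3 x4) (m a b))"
  by (metis c1_f9920 ma cp cm ina inb inc)
lemma c1_f9922: "\<And>x3 x4. x3\<in>A \<Longrightarrow> x4\<in>A \<Longrightarrow> (m (m x3 (m x4 a)) b) = (m x3 (m x4 (m a b)))"
  by (metis c1_f9921 ma cp cm ina inb inc)
lemma c1_f9923: "\<And>x3 x4. x3\<in>A \<Longrightarrow> x4\<in>A \<Longrightarrow> (m x3 (m x4 b)) = (m (m x3 (m x4 a)) b)"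
  by (metis c1_f9922 h1 cp cm ina inb inc)
lemma c1_f10796: "\<And>x15. x15\<in>A \<Longrightarrow> (m (p x15 (m x15 b)) a) = (m (m x15 b) a)"
  by (metis c1_f3709 pi cp cm ina inb inc)
lemma c1_f10912: "\<And>x15. x15\<in>A \<Longrightarrow> (m (p x15 (m x15 b)) a) = (m x15 (m b a))"
  by (metis c1_f10796 ma cp cm ina inb inc)
lemma c1_f10913: "\<And>x15. x15\<in>A \<Longrightarrow> (m x15 a) = (m (p x15 (m x15 b)) a)"
  by (metis c1_f10912 h2 cp cm ina inb inc)
lemma c1_f10999: "\<And>x3 x4. x3\<in>A \<Longrightarrow> x4\<in>A \<Longrightarrow> (m (m x3 (m x4 b)) a) = (m (m (p (m x3 x4) (m x3 (m x4 b))) b) a)"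
  by (metis c1_f10913 c1_f288 cp cm ina inb inc)
lemma c1_f11106: "\<And>x3 x4. x3\<in>A \<Longrightarrow> x4\<in>A \<Longrightarrow> (m (m x3 (m x4 b)) a) = (m (m (p (m x3 x4) (m x3 x4)) b) a)"
  by (metis c1_f10999 c1_f6967 cp cm ina inb inc)
lemma c1_f11107: "\<And>x3 x4. x3\<in>A \<Longrightarrow> x4\<in>A \<Longrightarrow> (m (m x3 (m x4 b)) a) = (m (m (m x3 x4) b) a)"
  by (metis c1_f11106 pi cp cm ina inb inc)
lemma c1_f11108: "\<And>x3 x4. x3\<in>A \<Longrightarrow> x4\<in>A \<Longrightarrow> (m (m x3 (m x4 b)) a) = (m (m x3 x4) (m b a))"
  by (metis c1_f11107 ma cp cm ina inb inc)
lemma c1_f11109: "\<And>x3 x4. x3\<in>A \<Longrightarrow> x4\<in>A \<Longrightarrow> (m (m x3 (m x4 b)) a) = (m x3 (m x4 (m b a)))"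
  by (metis c1_f11108 ma cp cm ina inb inc)
lemma c1_f11110: "\<And>x3 x4. x3\<in>A \<Longrightarrow> x4\<in>A \<Longrightarrow> (m x3 (m x4 a)) = (m (m x3 (m x4 b)) a)"
  by (metis c1_f11109 h2 cp cm ina inb inc)
lemma c1_f12740: "\<And>x45. x45\<in>A \<Longrightarrow> (m (p a b) (m x45 a)) = (m a (m x45 a))"
  by (metis c1_f5218 c1_f637 cp cm ina inb inc)
lemma c1_f25141: "\<And>x14 x15. x14\<in>A \<Longrightarrow> x15\<in>A \<Longrightarrow> (m x14 x15) = (m (m (m x14 x15) x14) (m x14 x15))"
  by (metis c1_f50 mi cp cm ina inb inc)
lemma c1_f25363: "\<And>x14 x15. x14\<in>A \<Longrightarrow> x15\<in>A \<Longrightarrow> (m x14 x15) = (m (m x14 (m x15 x14)) (m x14 x15))"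
  by (metis c1_f25141 ma cp cm ina inb inc)
lemma c1_f25712: "\<And>x119. x119\<in>A \<Longrightarrow> (m b x119) = (m (m a (m (m b x119) a)) (m b x119))"
  by (metis c1_f25363 c1_f41 cp cm ina inb inc)
lemma c1_f26264: "\<And>x119. x119\<in>A \<Longrightarrow> (m b x119) = (m (m a (m b (m x119 a))) (m b x119))"
  by (metis c1_f25712 ma cp cm ina inb inc)
lemma c1_f26265: "\<And>x119. x119\<in>A \<Longrightarrow> (m b x119) = (m (m b (m x119 a)) (m b x119))"
  by (metis c1_f26264 c1_f41 cp cm ina inb inc)
lemma c1_f49184: "\<And>x3. x3\<in>A \<Longrightarrow> (m (p a b) (m x3 b)) = (m (m a (m x3 a)) b)"
  by (metis c1_f12740 c1_f9923 cp cm ina inb inc)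
lemma c1_f49517: "\<And>x3. x3\<in>A \<Longrightarrow> (m (p a b) (m x3 b)) = (m a (m (m x3 a) b))"
  by (metis c1_f49184 ma cp cm ina inb inc)
lemma c1_f49518: "\<And>x3. x3\<in>A \<Longrightarrow> (m (p a b) (m x3 b)) = (m a (m x3 (m a b)))"
  by (metis c1_f49517 ma cp cm ina inb inc)
lemma c1_f49519: "\<And>x3. x3\<in>A \<Longrightarrow> (m a (m x3 b)) = (m (p a b) (m x3 b))"
  by (metis c1_f49518 h1 cp cm ina inb inc)
lemma c1_f49520: "\<And>x23. x23\<in>A \<Longrightarrow> (m b (m x23 b)) = (m a (m x23 b))"
  by (metis c1_f49519 c1_f6808 cp cm ina inb inc)
lemma c1_f58255: "\<And>x48. x48\<in>A \<Longrightarrow> (m b (m x48 a)) = (m (m a (m x48 b)) a)"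
  by (metis c1_f11110 c1_f49520 cp cm ina inb inc)
lemma c1_f58661: "\<And>x48. x48\<in>A \<Longrightarrow> (m b (m x48 a)) = (m a (m x48 a))"
  by (metis c1_f11110 c1_f58255 cp cm ina inb inc)
lemma c1_f58735: "\<And>x119. x119\<in>A \<Longrightarrow> (m b x119) = (m (m a (m x119 a)) (m b x119))"
  by (metis c1_f26265 c1_f58661 cp cm ina inb inc)
lemma c1_f65762: "\<And>x1. x1\<in>A \<Longrightarrow> (m b x1) = (m a (m (m x1 a) (m b x1)))"
  by (metis c1_f58735 ma cp cm ina inb inc)
lemma c1_f66165: "\<And>x1. x1\<in>A \<Longrightarrow> (m b x1) = (m a (m x1 (m a (m b x1))))"
  by (metis c1_f65762 ma cp cm ina inb inc)
lemma c1_f66166: "\<And>x1. x1\<in>A \<Longrightarrow> (m b x1) = (m a (m x1 (m b x1)))"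
  by (metis c1_f41 c1_f66165 cp cm ina inb inc)

lemma c1_goal: "m (m a c) (m b c) = m b c" by (metis c1_f66166 ma cp cm ina inb inc)
lemma k0_f38: "\<And>x0 x1. x0\<in>A \<Longrightarrow> x1\<in>A \<Longrightarrow> (m x0 x1) = (m x0 (m x0 x1))"
  by (metis ma mi cp cm ina inb inc)
lemma k0_f254: "\<And>x16 x14 x17 x15. x16\<in>A \<Longrightarrow> x14\<in>A \<Longrightarrow> x17\<in>A \<Longrightarrow> x15\<in>A \<Longrightarrow> (m (p (m x14 x15) x17) x16) = (p (m x14 (m x15 x16)) (m x17 x16))"
  by (metis dr ma cp cm ina inb inc)
lemma k0_f3751: "\<And>x80 x81. x80\<in>A \<Longrightarrow> x81\<in>A \<Longrightarrow> (m (p (m x80 a) x81) b) = (p (m x80 b) (m x81 b))"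
  by (metis h1 k0_f254 cp cm ina inb inc)
lemma k0_f3831: "\<And>x80 x81. x80\<in>A \<Longrightarrow> x81\<in>A \<Longrightarrow> (m (p (m x80 a) x81) b) = (m (p x80 x81) b)"
  by (metis dr k0_f3751 cp cm ina inb inc)
lemma k0_f12011: "\<And>x14. x14\<in>A \<Longrightarrow> (m (p x14 (m x14 a)) b) = (m (m x14 a) b)"
  by (metis k0_f3831 pi cp cm ina inb inc)
lemma k0_f12111: "\<And>x14. x14\<in>A \<Longrightarrow> (m x14 (m a b)) = (m (p x14 (m x14 a)) b)"
  by (metis k0_f12011 ma cp cm ina inb inc)
lemma k0_f12112: "\<And>x14. x14\<in>A \<Longrightarrow> (m x14 b) = (m (p x14 (m x14 a)) b)"
  by (metis h1 k0_f12111 cp cm ina inb inc)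
lemma k0_f12174: "\<And>x1. x1\<in>A \<Longrightarrow> (m (m x1 a) b) = (m (p x1 (m (m x1 a) a)) b)"
  by (metis k0_f12112 k0_f3831 cp cm ina inb inc)
lemma k0_f12270: "\<And>x1. x1\<in>A \<Longrightarrow> (m (m x1 a) b) = (m (p x1 (m x1 (m a a))) b)"
  by (metis k0_f12174 ma cp cm ina inb inc)
lemma k0_f12271: "\<And>x1. x1\<in>A \<Longrightarrow> (m (m x1 a) b) = (m (p x1 (m x1 a)) b)"
  by (metis k0_f12270 mi cp cm ina inb inc)
lemma k0_f12272: "\<And>x1. x1\<in>A \<Longrightarrow> (m x1 b) = (m (m x1 a) b)"
  by (metis k0_f12112 k0_f12271 cp cm ina inb inc)
lemma k0_f12374: "\<And>x28. x28\<in>A \<Longrightarrow> (m x28 b) = (m (m x28 a) (m x28 b))"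
  by (metis k0_f12272 k0_f38 cp cm ina inb inc)

lemma k0_goal: "m (m c a) (m c b) = m c b" by (metis k0_f12374 cp cm ina inb inc)
lemma k1_f23: "\<And>x0 x1. x0\<in>A \<Longrightarrow> x1\<in>A \<Longrightarrow> (p (p (m x0 (m x1 x0)) x0) (m x0 (m x1 x0))) = x0"
  by (metis ma vd cp cm ina inb inc)
lemma k1_f24: "\<And>x0 x1. x0\<in>A \<Longrightarrow> x1\<in>A \<Longrightarrow> (p x0 x1) = (p x0 (p x0 x1))"
  by (metis pa pi cp cm ina inb inc)
lemma k1_f39: "\<And>x0 x1. x0\<in>A \<Longrightarrow> x1\<in>A \<Longrightarrow> (m x0 x1) = (m x0 (m x0 x1))"
  by (metis ma mi cp cm ina inb inc)
lemma k1_f41: "\<And>x6. x6\<in>A \<Longrightarrow> (m b x6) = (m a (m b x6))"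
  by (metis h1 ma cp cm ina inb inc)
lemma k1_f43: "\<And>x3 x4. x3\<in>A \<Longrightarrow> x4\<in>A \<Longrightarrow> (m x3 x4) = (m x3 (m x4 (m x3 x4)))"
  by (metis ma mi cp cm ina inb inc)
lemma k1_f49: "\<And>x3 x4 x5. x3\<in>A \<Longrightarrow> x4\<in>A \<Longrightarrow> x5\<in>A \<Longrightarrow> (m x3 (m x4 x5)) = (m (m x3 x4) (m x3 (m x4 x5)))"
  by (metis k1_f39 ma cp cm ina inb inc)
lemma k1_f128: "\<And>x0 x1. x0\<in>A \<Longrightarrow> x1\<in>A \<Longrightarrow> (m x0 (p x0 x1)) = (p x0 (m x0 x1))"
  by (metis dl mi cp cm ina inb inc)
lemma k1_f129: "\<And>x2 x3 x4. x2\<in>A \<Longrightarrow> x3\<in>A \<Longrightarrow> x4\<in>A \<Longrightarrow> (m x2 (p (m x2 x3) x4)) = (p (m x2 x3) (m x2 x4))"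
  by (metis dl k1_f39 cp cm ina inb inc)
lemma k1_f136: "\<And>x0 x1. x0\<in>A \<Longrightarrow> x1\<in>A \<Longrightarrow> (m x0 (p x1 x0)) = (p (m x0 x1) x0)"
  by (metis dl mi cp cm ina inb inc)
lemma k1_f137: "\<And>x2 x3 x4. x2\<in>A \<Longrightarrow> x3\<in>A \<Longrightarrow> x4\<in>A \<Longrightarrow> (m x2 (p x4 (m x2 x3))) = (p (m x2 x4) (m x2 x3))"
  by (metis dl k1_f39 cp cm ina inb inc)
lemma k1_f141: "\<And>x14 x13. x14\<in>A \<Longrightarrow> x13\<in>A \<Longrightarrow> (m a (p x14 (m b x13))) = (p (m a x14) (m b x13))"
  by (metis dl k1_f41 cp cm ina inb inc)
lemma k1_f147: "\<And>x6 x7 x5. x6\<in>A \<Longrightarrow> x7\<in>A \<Longrightarrow> x5\<in>A \<Longrightarrow> (m x5 (p x6 x7)) = (p (m x5 x6) (m x5 (p x6 x7)))"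
  by (metis dl k1_f24 cp cm ina inb inc)
lemma k1_f148: "\<And>x10 x11 x8 x9. x10\<in>A \<Longrightarrow> x11\<in>A \<Longrightarrow> x8\<in>A \<Longrightarrow> x9\<in>A \<Longrightarrow> (p (m x8 x9) (p (m x8 x10) x11)) = (p (m x8 (p x9 x10)) x11)"
  by (metis dl pa cp cm ina inb inc)
lemma k1_f149: "\<And>x2 x3 x4. x2\<in>A \<Longrightarrow> x3\<in>A \<Longrightarrow> x4\<in>A \<Longrightarrow> (m x2 (p (m x2 x3) x4)) = (m x2 (p x3 x4))"
  by (metis dl k1_f129 cp cm ina inb inc)
lemma k1_f153: "\<And>x2 x3 x4. x2\<in>A \<Longrightarrow> x3\<in>A \<Longrightarrow> x4\<in>A \<Longrightarrow> (m x2 (p x4 (m x2 x3))) = (m x2 (p x4 x3))"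
  by (metis dl k1_f137 cp cm ina inb inc)
lemma k1_f158: "\<And>x0 x1. x0\<in>A \<Longrightarrow> x1\<in>A \<Longrightarrow> (m (p x0 x1) x0) = (p x0 (m x1 x0))"
  by (metis dr mi cp cm ina inb inc)
lemma k1_f161: "\<And>x10 x11 x8 x9. x10\<in>A \<Longrightarrow> x11\<in>A \<Longrightarrow> x8\<in>A \<Longrightarrow> x9\<in>A \<Longrightarrow> (m (p (m x8 x9) x11) x10) = (p (m x8 (m x9 x10)) (m x11 x10))"
  by (metis dr ma cp cm ina inb inc)
lemma k1_f164: "\<And>x15. x15\<in>A \<Longrightarrow> (m (p b x15) a) = (p a (m x15 a))"
  by (metis dr h2 cp cm ina inb inc)
lemma k1_f166: "\<And>x0 x1. x0\<in>A \<Longrightarrow> x1\<in>A \<Longrightarrow> (m (p x1 x0) x0) = (p (m x1 x0) x0)"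
  by (metis dr mi cp cm ina inb inc)
lemma k1_f169: "\<And>x10 x11 x8 x9. x10\<in>A \<Longrightarrow> x11\<in>A \<Longrightarrow> x8\<in>A \<Longrightarrow> x9\<in>A \<Longrightarrow> (m (p x11 (m x8 x9)) x10) = (p (m x11 x10) (m x8 (m x9 x10)))"
  by (metis dr ma cp cm ina inb inc)
lemma k1_f170: "\<And>x12. x12\<in>A \<Longrightarrow> (m (p x12 a) b) = (p (m x12 b) b)"
  by (metis dr h1 cp cm ina inb inc)
lemma k1_f191: "\<And>x11 x12 x13. x11\<in>A \<Longrightarrow> x12\<in>A \<Longrightarrow> x13\<in>A \<Longrightarrow> (p (m x11 x12) (m (m x11 x12) (m x13 x12))) = (m (m x11 x12) (m (p x11 x13) x12))"
  by (metis dr k1_f128 cp cm ina inb inc)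
lemma k1_f210: "\<And>x11 x12 x13. x11\<in>A \<Longrightarrow> x12\<in>A \<Longrightarrow> x13\<in>A \<Longrightarrow> (p (m x11 x12) (m (m x11 x12) (m x13 x12))) = (m x11 (m x12 (m (p x11 x13) x12)))"
  by (metis k1_f191 ma cp cm ina inb inc)
lemma k1_f211: "\<And>x11 x12 x13. x11\<in>A \<Longrightarrow> x12\<in>A \<Longrightarrow> x13\<in>A \<Longrightarrow> (m x11 (m x12 (m (p x11 x13) x12))) = (p (m x11 x12) (m x11 (m x12 (m x13 x12))))"
  by (metis k1_f210 ma cp cm ina inb inc)
lemma k1_f251: "\<And>x2 x1. x2\<in>A \<Longrightarrow> x1\<in>A \<Longrightarrow> (p (m (p x1 x2) x1) (p x1 x2)) = (m (p x1 x2) (p x1 x2))"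
  by (metis k1_f136 k1_f24 cp cm ina inb inc)
lemma k1_f255: "\<And>x11 x12 x13. x11\<in>A \<Longrightarrow> x12\<in>A \<Longrightarrow> x13\<in>A \<Longrightarrow> (p (m (m x13 x12) (m x11 x12)) (m x13 x12)) = (m (m x13 x12) (m (p x11 x13) x12))"
  by (metis dr k1_f136 cp cm ina inb inc)
lemma k1_f274: "\<And>x2 x1. x2\<in>A \<Longrightarrow> x1\<in>A \<Longrightarrow> (p x1 x2) = (p (m (p x1 x2) x1) (p x1 x2))"
  by (metis k1_f251 mi cp cm ina inb inc)
lemma k1_f275: "\<And>x2 x1. x2\<in>A \<Longrightarrow> x1\<in>A \<Longrightarrow> (p x1 x2) = (p (p x1 (m x2 x1)) (p x1 x2))"
  by (metis k1_f158 k1_f274 cp cm ina inb inc)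
lemma k1_f282: "\<And>x11 x12 x13. x11\<in>A \<Longrightarrow> x12\<in>A \<Longrightarrow> x13\<in>A \<Longrightarrow> (p (m (m x13 x12) (m x11 x12)) (m x13 x12)) = (m x13 (m x12 (m (p x11 x13) x12)))"
  by (metis k1_f255 ma cp cm ina inb inc)
lemma k1_f283: "\<And>x11 x12 x13. x11\<in>A \<Longrightarrow> x12\<in>A \<Longrightarrow> x13\<in>A \<Longrightarrow> (m x13 (m x12 (m (p x11 x13) x12))) = (p (m x13 (m x12 (m x11 x12))) (m x13 x12))"
  by (metis k1_f282 ma cp cm ina inb inc)
lemma k1_f499: "\<And>x10 x9. x10\<in>A \<Longrightarrow> x9\<in>A \<Longrightarrow> (p (p (m x9 (m x10 x9)) x9) (m (p (m x9 (m x10 x9)) x9) (m x9 (m x10 x9)))) = (m (p (m x9 (m x10 x9)) x9) x9)"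
  by (metis k1_f128 k1_f23 cp cm ina inb inc)
lemma k1_f540: "\<And>x10 x9. x10\<in>A \<Longrightarrow> x9\<in>A \<Longrightarrow> (p (p (m x9 (m x10 x9)) x9) (m (p (m x9 (m x10 x9)) x9) (m x9 (m x10 x9)))) = (p (m (m x9 (m x10 x9)) x9) x9)"
  by (metis k1_f166 k1_f499 cp cm ina inb inc)
lemma k1_f541: "\<And>x10 x9. x10\<in>A \<Longrightarrow> x9\<in>A \<Longrightarrow> (p (p (m x9 (m x10 x9)) x9) (m (p (m x9 (m x10 x9)) x9) (m x9 (m x10 x9)))) = (p (m x9 (m (m x10 x9) x9)) x9)"
  by (metis k1_f540 ma cp cm ina inb inc)
lemma k1_f542: "\<And>x10 x9. x10\<in>A \<Longrightarrow> x9\<in>A \<Longrightarrow> (p (p (m x9 (m x10 x9)) x9) (m (p (m x9 (m x10 x9)) x9) (m x9 (m x10 x9)))) = (p (m x9 (m x10 (m x9 x9))) x9)"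
  by (metis k1_f541 ma cp cm ina inb inc)
lemma k1_f543: "\<And>x10 x9. x10\<in>A \<Longrightarrow> x9\<in>A \<Longrightarrow> (p (m x9 (m x10 x9)) x9) = (p (p (m x9 (m x10 x9)) x9) (m (p (m x9 (m x10 x9)) x9) (m x9 (m x10 x9))))"
  by (metis k1_f542 mi cp cm ina inb inc)
lemma k1_f544: "\<And>x10 x9. x10\<in>A \<Longrightarrow> x9\<in>A \<Longrightarrow> (p (m x9 (m x10 x9)) x9) = (p (p (m x9 (m x10 x9)) x9) (p (m x9 (m x10 x9)) (m x9 (m x9 (m x10 x9)))))"
  by (metis k1_f158 k1_f543 cp cm ina inb inc)
lemma k1_f545: "\<And>x10 x9. x10\<in>A \<Longrightarrow> x9\<in>A \<Longrightarrow> (p (m x9 (m x10 x9)) x9) = (p (p (m x9 (m x10 x9)) x9) (m x9 (p (m x10 x9) (m x9 (m x10 x9)))))"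
  by (metis dl k1_f544 cp cm ina inb inc)
lemma k1_f546: "\<And>x10 x9. x10\<in>A \<Longrightarrow> x9\<in>A \<Longrightarrow> (p (m x9 (m x10 x9)) x9) = (p (p (m x9 (m x10 x9)) x9) (m x9 (p (m x10 x9) (m x10 x9))))"
  by (metis k1_f153 k1_f545 cp cm ina inb inc)
lemma k1_f547: "\<And>x10 x9. x10\<in>A \<Longrightarrow> x9\<in>A \<Longrightarrow> (p (m x9 (m x10 x9)) x9) = (p (p (m x9 (m x10 x9)) x9) (m x9 (m x10 x9)))"
  by (metis k1_f546 pi cp cm ina inb inc)
lemma k1_f548: "\<And>x10 x9. x10\<in>A \<Longrightarrow> x9\<in>A \<Longrightarrow> (p (m x9 (m x10 x9)) x9) = x9"
  by (metis k1_f23 k1_f547 cp cm ina inb inc)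
lemma k1_f554: "\<And>x0 x1. x0\<in>A \<Longrightarrow> x1\<in>A \<Longrightarrow> (p x0 (m x0 (m x1 x0))) = x0"
  by (metis k1_f23 k1_f548 cp cm ina inb inc)
lemma k1_f625: "\<And>x20. x20\<in>A \<Longrightarrow> (m b a) = (p a (m (m b (m x20 b)) a))"
  by (metis k1_f164 k1_f554 cp cm ina inb inc)
lemma k1_f663: "\<And>x20. x20\<in>A \<Longrightarrow> (m b a) = (p a (m b (m (m x20 b) a)))"
  by (metis k1_f625 ma cp cm ina inb inc)
lemma k1_f664: "\<And>x20. x20\<in>A \<Longrightarrow> (m b a) = (p a (m b (m x20 (m b a))))"
  by (metis k1_f663 ma cp cm ina inb inc)
lemma k1_f665: "\<And>x20. x20\<in>A \<Longrightarrow> a = (p a (m b (m x20 a)))"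
  by (metis h2 k1_f664 cp cm ina inb inc)
lemma k1_f699: "\<And>x15. x15\<in>A \<Longrightarrow> (m a b) = (p (m (m a (m x15 a)) b) b)"
  by (metis k1_f170 k1_f548 cp cm ina inb inc)
lemma k1_f742: "\<And>x15. x15\<in>A \<Longrightarrow> (m a b) = (p (m a (m (m x15 a) b)) b)"
  by (metis k1_f699 ma cp cm ina inb inc)
lemma k1_f743: "\<And>x15. x15\<in>A \<Longrightarrow> (m a b) = (p (m a (m x15 (m a b))) b)"
  by (metis k1_f742 ma cp cm ina inb inc)
lemma k1_f744: "\<And>x15. x15\<in>A \<Longrightarrow> b = (p (m a (m x15 b)) b)"
  by (metis h1 k1_f743 cp cm ina inb inc)
lemma k1_f1347: "\<And>x18 x17. x18\<in>A \<Longrightarrow> x17\<in>A \<Longrightarrow> (m x17 (p x18 (m x17 x18))) = (m x17 (m x17 x18))"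
  by (metis k1_f149 pi cp cm ina inb inc)
lemma k1_f1408: "\<And>x18 x17. x18\<in>A \<Longrightarrow> x17\<in>A \<Longrightarrow> (m x17 x18) = (m x17 (p x18 (m x17 x18)))"
  by (metis k1_f1347 k1_f39 cp cm ina inb inc)
lemma k1_f2434: "\<And>x31 x32 x30. x31\<in>A \<Longrightarrow> x32\<in>A \<Longrightarrow> x30\<in>A \<Longrightarrow> (p (m x30 (p x32 x31)) (m x30 x31)) = (p (m x30 x32) (m x30 x31))"
  by (metis k1_f148 pi cp cm ina inb inc)
lemma k1_f2562: "\<And>x31 x32 x30. x31\<in>A \<Longrightarrow> x32\<in>A \<Longrightarrow> x30\<in>A \<Longrightarrow> (m x30 (p x32 x31)) = (p (m x30 (p x32 x31)) (m x30 x31))"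
  by (metis dl k1_f2434 cp cm ina inb inc)
lemma k1_f3639: "\<And>x2 x0 x1. x2\<in>A \<Longrightarrow> x0\<in>A \<Longrightarrow> x1\<in>A \<Longrightarrow> (m (p (m x1 x0) x2) x0) = (p (m x1 x0) (m x2 x0))"
  by (metis k1_f161 mi cp cm ina inb inc)
lemma k1_f3661: "\<And>x88 x89. x88\<in>A \<Longrightarrow> x89\<in>A \<Longrightarrow> (m (p (m x88 a) x89) b) = (p (m x88 b) (m x89 b))"
  by (metis h1 k1_f161 cp cm ina inb inc)
lemma k1_f3672: "\<And>x120 x121. x120\<in>A \<Longrightarrow> x121\<in>A \<Longrightarrow> (m (p (m x120 b) x121) a) = (p (m x120 a) (m x121 a))"
  by (metis h2 k1_f161 cp cm ina inb inc)
lemma k1_f3752: "\<And>x2 x0 x1. x2\<in>A \<Longrightarrow> x0\<in>A \<Longrightarrow> x1\<in>A \<Longrightarrow> (m (p (m x1 x0) x2) x0) = (m (p x1 x2) x0)"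
  by (metis dr k1_f3639 cp cm ina inb inc)
lemma k1_f3759: "\<And>x88 x89. x88\<in>A \<Longrightarrow> x89\<in>A \<Longrightarrow> (m (p (m x88 a) x89) b) = (m (p x88 x89) b)"
  by (metis dr k1_f3661 cp cm ina inb inc)
lemma k1_f3763: "\<And>x120 x121. x120\<in>A \<Longrightarrow> x121\<in>A \<Longrightarrow> (m (p (m x120 b) x121) a) = (m (p x120 x121) a)"
  by (metis dr k1_f3672 cp cm ina inb inc)
lemma k1_f5365: "\<And>x2 x0 x1. x2\<in>A \<Longrightarrow> x0\<in>A \<Longrightarrow> x1\<in>A \<Longrightarrow> (p (m x1 x0) (m x2 x0)) = (m (p x1 (m x2 x0)) x0)"
  by (metis k1_f169 mi cp cm ina inb inc)
lemma k1_f5467: "\<And>x2 x0 x1. x2\<in>A \<Longrightarrow> x0\<in>A \<Longrightarrow> x1\<in>A \<Longrightarrow> (m (p x1 x2) x0) = (m (p x1 (m x2 x0)) x0)"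
  by (metis dr k1_f5365 cp cm ina inb inc)
lemma k1_f6807: "\<And>x8 x6 x9 x7. x8\<in>A \<Longrightarrow> x6\<in>A \<Longrightarrow> x9\<in>A \<Longrightarrow> x7\<in>A \<Longrightarrow> (m (p x6 (m x8 (m x9 x7))) x7) = (m (m (p x6 (m x8 x9)) x7) x7)"
  by (metis k1_f169 k1_f3752 cp cm ina inb inc)
lemma k1_f6812: "\<And>x23. x23\<in>A \<Longrightarrow> (m b (m x23 b)) = (m (p a b) (m x23 b))"
  by (metis k1_f3752 k1_f744 cp cm ina inb inc)
lemma k1_f6816: "\<And>x29 x30. x29\<in>A \<Longrightarrow> x30\<in>A \<Longrightarrow> (m (p x29 (m x29 x30)) x30) = (m (m x29 x30) x30)"
  by (metis k1_f3752 pi cp cm ina inb inc)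
lemma k1_f6817: "\<And>x31 x32 x33. x31\<in>A \<Longrightarrow> x32\<in>A \<Longrightarrow> x33\<in>A \<Longrightarrow> (m (p x31 (p (m x31 x32) x33)) x32) = (m (p (m x31 x32) x33) x32)"
  by (metis k1_f24 k1_f3752 cp cm ina inb inc)
lemma k1_f6970: "\<And>x8 x6 x9 x7. x8\<in>A \<Longrightarrow> x6\<in>A \<Longrightarrow> x9\<in>A \<Longrightarrow> x7\<in>A \<Longrightarrow> (m (p x6 (m x8 (m x9 x7))) x7) = (m (p x6 (m x8 x9)) (m x7 x7))"
  by (metis k1_f6807 ma cp cm ina inb inc)
lemma k1_f6971: "\<And>x8 x6 x9 x7. x8\<in>A \<Longrightarrow> x6\<in>A \<Longrightarrow> x9\<in>A \<Longrightarrow> x7\<in>A \<Longrightarrow> (m (p x6 (m x8 x9)) x7) = (m (p x6 (m x8 (m x9 x7))) x7)"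
  by (metis k1_f6970 mi cp cm ina inb inc)
lemma k1_f6973: "\<And>x29 x30. x29\<in>A \<Longrightarrow> x30\<in>A \<Longrightarrow> (m (p x29 (m x29 x30)) x30) = (m x29 (m x30 x30))"
  by (metis k1_f6816 ma cp cm ina inb inc)
lemma k1_f6974: "\<And>x29 x30. x29\<in>A \<Longrightarrow> x30\<in>A \<Longrightarrow> (m x29 x30) = (m (p x29 (m x29 x30)) x30)"
  by (metis k1_f6973 mi cp cm ina inb inc)
lemma k1_f6975: "\<And>x31 x32 x33. x31\<in>A \<Longrightarrow> x32\<in>A \<Longrightarrow> x33\<in>A \<Longrightarrow> (m (p x31 x33) x32) = (m (p x31 (p (m x31 x32) x33)) x32)"
  by (metis k1_f3752 k1_f6817 cp cm ina inb inc)
lemma k1_f7089: "\<And>x24 x25 x23. x24\<in>A \<Longrightarrow> x25\<in>A \<Longrightarrow> x23\<in>A \<Longrightarrow> (m (m x23 (m x24 x25)) x25) = (m (m (p (m x23 x24) (m x23 (m x24 x25))) x25) x25)"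
  by (metis k1_f161 k1_f6974 cp cm ina inb inc)
lemma k1_f7197: "\<And>x24 x25 x23. x24\<in>A \<Longrightarrow> x25\<in>A \<Longrightarrow> x23\<in>A \<Longrightarrow> (m (m x23 (m x24 x25)) x25) = (m (m (p (m x23 x24) (m x23 x24)) x25) x25)"
  by (metis k1_f6971 k1_f7089 cp cm ina inb inc)
lemma k1_f7198: "\<And>x24 x25 x23. x24\<in>A \<Longrightarrow> x25\<in>A \<Longrightarrow> x23\<in>A \<Longrightarrow> (m (m x23 (m x24 x25)) x25) = (m (m (m x23 x24) x25) x25)"
  by (metis k1_f7197 pi cp cm ina inb inc)
lemma k1_f7199: "\<And>x24 x25 x23. x24\<in>A \<Longrightarrow> x25\<in>A \<Longrightarrow> x23\<in>A \<Longrightarrow> (m (m x23 (m x24 x25)) x25) = (m (m x23 x24) (m x25 x25))"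
  by (metis k1_f7198 ma cp cm ina inb inc)
lemma k1_f7200: "\<And>x24 x25 x23. x24\<in>A \<Longrightarrow> x25\<in>A \<Longrightarrow> x23\<in>A \<Longrightarrow> (m (m x23 (m x24 x25)) x25) = (m x23 (m x24 (m x25 x25)))"
  by (metis k1_f7199 ma cp cm ina inb inc)
lemma k1_f7201: "\<And>x24 x25 x23. x24\<in>A \<Longrightarrow> x25\<in>A \<Longrightarrow> x23\<in>A \<Longrightarrow> (m x23 (m x24 x25)) = (m (m x23 (m x24 x25)) x25)"
  by (metis k1_f7200 mi cp cm ina inb inc)
lemma k1_f9664: "\<And>x15. x15\<in>A \<Longrightarrow> (m (m x15 a) b) = (m (p x15 (m x15 a)) b)"
  by (metis k1_f3759 pi cp cm ina inb inc)
lemma k1_f9764: "\<And>x15. x15\<in>A \<Longrightarrow> (m x15 (m a b)) = (m (p x15 (m x15 a)) b)"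
  by (metis k1_f9664 ma cp cm ina inb inc)
lemma k1_f9765: "\<And>x15. x15\<in>A \<Longrightarrow> (m x15 b) = (m (p x15 (m x15 a)) b)"
  by (metis h1 k1_f9764 cp cm ina inb inc)
lemma k1_f9837: "\<And>x3 x4. x3\<in>A \<Longrightarrow> x4\<in>A \<Longrightarrow> (m (m x3 (m x4 a)) b) = (m (m (p (m x3 x4) (m x3 (m x4 a))) a) b)"
  by (metis k1_f161 k1_f9765 cp cm ina inb inc)
lemma k1_f9923: "\<And>x3 x4. x3\<in>A \<Longrightarrow> x4\<in>A \<Longrightarrow> (m (m x3 (m x4 a)) b) = (m (m (p (m x3 x4) (m x3 x4)) a) b)"
  by (metis k1_f6971 k1_f9837 cp cm ina inb inc)
lemma k1_f9924: "\<And>x3 x4. x3\<in>A \<Longrightarrow> x4\<in>A \<Longrightarrow> (m (m x3 (m x4 a)) b) = (m (m (m x3 x4) a) b)"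
  by (metis k1_f9923 pi cp cm ina inb inc)
lemma k1_f9925: "\<And>x3 x4. x3\<in>A \<Longrightarrow> x4\<in>A \<Longrightarrow> (m (m x3 (m x4 a)) b) = (m (m x3 x4) (m a b))"
  by (metis k1_f9924 ma cp cm ina inb inc)
lemma k1_f9926: "\<And>x3 x4. x3\<in>A \<Longrightarrow> x4\<in>A \<Longrightarrow> (m (m x3 (m x4 a)) b) = (m x3 (m x4 (m a b)))"
  by (metis k1_f9925 ma cp cm ina inb inc)
lemma k1_f9927: "\<And>x3 x4. x3\<in>A \<Longrightarrow> x4\<in>A \<Longrightarrow> (m x3 (m x4 b)) = (m (m x3 (m x4 a)) b)"
  by (metis h1 k1_f9926 cp cm ina inb inc)
lemma k1_f10800: "\<And>x15. x15\<in>A \<Longrightarrow> (m (p x15 (m x15 b)) a) = (m (m x15 b) a)"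
  by (metis k1_f3763 pi cp cm ina inb inc)
lemma k1_f10916: "\<And>x15. x15\<in>A \<Longrightarrow> (m (p x15 (m x15 b)) a) = (m x15 (m b a))"
  by (metis k1_f10800 ma cp cm ina inb inc)
lemma k1_f10917: "\<And>x15. x15\<in>A \<Longrightarrow> (m x15 a) = (m (p x15 (m x15 b)) a)"
  by (metis h2 k1_f10916 cp cm ina inb inc)
lemma k1_f11003: "\<And>x3 x4. x3\<in>A \<Longrightarrow> x4\<in>A \<Longrightarrow> (m (m x3 (m x4 b)) a) = (m (m (p (m x3 x4) (m x3 (m x4 b))) b) a)"
  by (metis k1_f10917 k1_f161 cp cm ina inb inc)
lemma k1_f11110: "\<And>x3 x4. x3\<in>A \<Longrightarrow> x4\<in>A \<Longrightarrow> (m (m x3 (m x4 b)) a) = (m (m (p (m x3 x4) (m x3 x4)) b) a)"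
  by (metis k1_f11003 k1_f6971 cp cm ina inb inc)
lemma k1_f11111: "\<And>x3 x4. x3\<in>A \<Longrightarrow> x4\<in>A \<Longrightarrow> (m (m x3 (m x4 b)) a) = (m (m (m x3 x4) b) a)"
  by (metis k1_f11110 pi cp cm ina inb inc)
lemma k1_f11112: "\<And>x3 x4. x3\<in>A \<Longrightarrow> x4\<in>A \<Longrightarrow> (m (m x3 (m x4 b)) a) = (m (m x3 x4) (m b a))"
  by (metis k1_f11111 ma cp cm ina inb inc)
lemma k1_f11113: "\<And>x3 x4. x3\<in>A \<Longrightarrow> x4\<in>A \<Longrightarrow> (m (m x3 (m x4 b)) a) = (m x3 (m x4 (m b a)))"
  by (metis k1_f11112 ma cp cm ina inb inc)
lemma k1_f11114: "\<And>x3 x4. x3\<in>A \<Longrightarrow> x4\<in>A \<Longrightarrow> (m x3 (m x4 a)) = (m (m x3 (m x4 b)) a)"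
  by (metis h2 k1_f11113 cp cm ina inb inc)
lemma k1_f12744: "\<And>x45. x45\<in>A \<Longrightarrow> (m (p a b) (m x45 a)) = (m a (m x45 a))"
  by (metis k1_f5467 k1_f665 cp cm ina inb inc)
lemma k1_f25465: "\<And>x14 x15. x14\<in>A \<Longrightarrow> x15\<in>A \<Longrightarrow> (m x14 x15) = (m (m (m x14 x15) x14) (m x14 x15))"
  by (metis k1_f49 mi cp cm ina inb inc)
lemma k1_f25690: "\<And>x14 x15. x14\<in>A \<Longrightarrow> x15\<in>A \<Longrightarrow> (m x14 x15) = (m (m x14 (m x15 x14)) (m x14 x15))"
  by (metis k1_f25465 ma cp cm ina inb inc)
lemma k1_f26043: "\<And>x119. x119\<in>A \<Longrightarrow> (m b x119) = (m (m a (m (m b x119) a)) (m b x119))"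
  by (metis k1_f25690 k1_f41 cp cm ina inb inc)
lemma k1_f26602: "\<And>x119. x119\<in>A \<Longrightarrow> (m b x119) = (m (m a (m b (m x119 a))) (m b x119))"
  by (metis k1_f26043 ma cp cm ina inb inc)
lemma k1_f26603: "\<And>x119. x119\<in>A \<Longrightarrow> (m b x119) = (m (m b (m x119 a)) (m b x119))"
  by (metis k1_f26602 k1_f41 cp cm ina inb inc)
lemma k1_f49299: "\<And>x3. x3\<in>A \<Longrightarrow> (m (p a b) (m x3 b)) = (m (m a (m x3 a)) b)"
  by (metis k1_f12744 k1_f9927 cp cm ina inb inc)
lemma k1_f49637: "\<And>x3. x3\<in>A \<Longrightarrow> (m (p a b) (m x3 b)) = (m a (m (m x3 a) b))"
  by (metis k1_f49299 ma cp cm ina inb inc)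
lemma k1_f49638: "\<And>x3. x3\<in>A \<Longrightarrow> (m (p a b) (m x3 b)) = (m a (m x3 (m a b)))"
  by (metis k1_f49637 ma cp cm ina inb inc)
lemma k1_f49639: "\<And>x3. x3\<in>A \<Longrightarrow> (m a (m x3 b)) = (m (p a b) (m x3 b))"
  by (metis h1 k1_f49638 cp cm ina inb inc)
lemma k1_f49640: "\<And>x23. x23\<in>A \<Longrightarrow> (m b (m x23 b)) = (m a (m x23 b))"
  by (metis k1_f49639 k1_f6812 cp cm ina inb inc)
lemma k1_f50673: "\<And>x96 x94 x95. x96\<in>A \<Longrightarrow> x94\<in>A \<Longrightarrow> x95\<in>A \<Longrightarrow> (m x96 x94) = (p (m x96 (m x94 (m x95 x94))) (m x96 x94))"
  by (metis k1_f147 k1_f548 cp cm ina inb inc)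
lemma k1_f51105: "\<And>x11 x12 x13. x11\<in>A \<Longrightarrow> x12\<in>A \<Longrightarrow> x13\<in>A \<Longrightarrow> (m x13 x12) = (m x13 (m x12 (m (p x11 x13) x12)))"
  by (metis k1_f283 k1_f50673 cp cm ina inb inc)
lemma k1_f51366: "\<And>x28 x26 x27. x28\<in>A \<Longrightarrow> x26\<in>A \<Longrightarrow> x27\<in>A \<Longrightarrow> (m (m x26 (m x27 x26)) x28) = (m (m x26 (m x27 x26)) (m x28 (m x26 x28)))"
  by (metis k1_f51105 k1_f554 cp cm ina inb inc)
lemma k1_f51397: "\<And>x145 x144. x145\<in>A \<Longrightarrow> x144\<in>A \<Longrightarrow> (m (m b (m x144 a)) x145) = (m (m b (m x144 a)) (m x145 (m a x145)))"
  by (metis k1_f51105 k1_f665 cp cm ina inb inc)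
lemma k1_f51581: "\<And>x78 x76 x77. x78\<in>A \<Longrightarrow> x76\<in>A \<Longrightarrow> x77\<in>A \<Longrightarrow> (m x76 x77) = (m (m x76 x77) (m (p x78 x76) x77))"
  by (metis k1_f51105 k1_f7201 cp cm ina inb inc)
lemma k1_f51749: "\<And>x28 x26 x27. x28\<in>A \<Longrightarrow> x26\<in>A \<Longrightarrow> x27\<in>A \<Longrightarrow> (m x26 (m (m x27 x26) x28)) = (m (m x26 (m x27 x26)) (m x28 (m x26 x28)))"
  by (metis k1_f51366 ma cp cm ina inb inc)
lemma k1_f51750: "\<And>x28 x26 x27. x28\<in>A \<Longrightarrow> x26\<in>A \<Longrightarrow> x27\<in>A \<Longrightarrow> (m (m x26 (m x27 x26)) (m x28 (m x26 x28))) = (m x26 (m x27 (m x26 x28)))"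
  by (metis k1_f51749 ma cp cm ina inb inc)
lemma k1_f51782: "\<And>x145 x144. x145\<in>A \<Longrightarrow> x144\<in>A \<Longrightarrow> (m (m b (m x144 a)) (m x145 (m a x145))) = (m b (m (m x144 a) x145))"
  by (metis k1_f51397 ma cp cm ina inb inc)
lemma k1_f51783: "\<And>x145 x144. x145\<in>A \<Longrightarrow> x144\<in>A \<Longrightarrow> (m (m b (m x144 a)) (m x145 (m a x145))) = (m b (m x144 (m a x145)))"
  by (metis k1_f51782 ma cp cm ina inb inc)
lemma k1_f58148: "\<And>x48. x48\<in>A \<Longrightarrow> (m b (m x48 a)) = (m (m a (m x48 b)) a)"
  by (metis k1_f11114 k1_f49640 cp cm ina inb inc)
lemma k1_f58559: "\<And>x48. x48\<in>A \<Longrightarrow> (m a (m x48 a)) = (m b (m x48 a))"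
  by (metis k1_f11114 k1_f58148 cp cm ina inb inc)
lemma k1_f58631: "\<And>x119. x119\<in>A \<Longrightarrow> (m b x119) = (m (m a (m x119 a)) (m b x119))"
  by (metis k1_f26603 k1_f58559 cp cm ina inb inc)
lemma k1_f58636: "\<And>x145 x144. x145\<in>A \<Longrightarrow> x144\<in>A \<Longrightarrow> (m b (m x144 (m a x145))) = (m (m a (m x144 a)) (m x145 (m a x145)))"
  by (metis k1_f51783 k1_f58559 cp cm ina inb inc)
lemma k1_f58651: "\<And>x145 x144. x145\<in>A \<Longrightarrow> x144\<in>A \<Longrightarrow> (m b (m x144 (m a x145))) = (m a (m x144 (m a x145)))"
  by (metis k1_f51750 k1_f58636 cp cm ina inb inc)
lemma k1_f64021: "\<And>x1. x1\<in>A \<Longrightarrow> (m b x1) = (m a (m (m x1 a) (m b x1)))"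
  by (metis k1_f58631 ma cp cm ina inb inc)
lemma k1_f64361: "\<And>x1. x1\<in>A \<Longrightarrow> (m b x1) = (m a (m x1 (m a (m b x1))))"
  by (metis k1_f64021 ma cp cm ina inb inc)
lemma k1_f64362: "\<And>x1. x1\<in>A \<Longrightarrow> (m b x1) = (m a (m x1 (m b x1)))"
  by (metis k1_f41 k1_f64361 cp cm ina inb inc)
lemma k1_f64558: "\<And>x56. x56\<in>A \<Longrightarrow> (m b x56) = (m (m a x56) (m b x56))"
  by (metis k1_f49 k1_f64362 cp cm ina inb inc)
lemma k1_f64926: "\<And>x156. x156\<in>A \<Longrightarrow> (m (m b x156) (m a x156)) = (m (m (m b x156) (m b x156)) (m (m b x156) (m a x156)))"
  by (metis k1_f25690 k1_f64558 cp cm ina inb inc)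
lemma k1_f65367: "\<And>x156. x156\<in>A \<Longrightarrow> (m b (m x156 (m a x156))) = (m (m (m b x156) (m b x156)) (m b (m x156 (m a x156))))"
  by (metis k1_f64926 ma cp cm ina inb inc)
lemma k1_f65368: "\<And>x156. x156\<in>A \<Longrightarrow> (m a (m x156 (m a x156))) = (m (m (m b x156) (m b x156)) (m a (m x156 (m a x156))))"
  by (metis k1_f58651 k1_f65367 cp cm ina inb inc)
lemma k1_f65369: "\<And>x156. x156\<in>A \<Longrightarrow> (m a x156) = (m (m (m b x156) (m b x156)) (m a x156))"
  by (metis k1_f43 k1_f65368 cp cm ina inb inc)
lemma k1_f65370: "\<And>x156. x156\<in>A \<Longrightarrow> (m a x156) = (m (m b x156) (m a x156))"
  by (metis k1_f65369 mi cp cm ina inb inc)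
lemma k1_f67573: "\<And>x54. x54\<in>A \<Longrightarrow> (m a (p x54 (m b x54))) = (m (m b x54) (m a (p x54 (m b x54))))"
  by (metis k1_f1408 k1_f65370 cp cm ina inb inc)
lemma k1_f67671: "\<And>x95. x95\<in>A \<Longrightarrow> (p (m a x95) (m b x95)) = (p (p (m a x95) (m a x95)) (p (m a x95) (m b x95)))"
  by (metis k1_f275 k1_f65370 cp cm ina inb inc)
lemma k1_f67726: "\<And>x54. x54\<in>A \<Longrightarrow> (p (m a x54) (m b x54)) = (m (m b x54) (p (m a x54) (m b x54)))"
  by (metis k1_f141 k1_f67573 cp cm ina inb inc)
lemma k1_f67727: "\<And>x54. x54\<in>A \<Longrightarrow> (m (p a b) x54) = (m (m b x54) (m (p a b) x54))"
  by (metis dr k1_f67726 cp cm ina inb inc)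
lemma k1_f67728: "\<And>x54. x54\<in>A \<Longrightarrow> (m b x54) = (m (p a b) x54)"
  by (metis k1_f51581 k1_f67727 cp cm ina inb inc)
lemma k1_f68171: "\<And>x95. x95\<in>A \<Longrightarrow> (m (p a b) x95) = (p (p (m a x95) (m a x95)) (m (p a b) x95))"
  by (metis dr k1_f67671 cp cm ina inb inc)
lemma k1_f68172: "\<And>x95. x95\<in>A \<Longrightarrow> (m b x95) = (p (p (m a x95) (m a x95)) (m b x95))"
  by (metis k1_f67728 k1_f68171 cp cm ina inb inc)
lemma k1_f68173: "\<And>x95. x95\<in>A \<Longrightarrow> (m b x95) = (p (m a x95) (m b x95))"
  by (metis k1_f68172 pi cp cm ina inb inc)
lemma k1_f70831: "\<And>x9. x9\<in>A \<Longrightarrow> (m (p a (m b x9)) x9) = (m (m b x9) x9)"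
  by (metis k1_f3752 k1_f68173 cp cm ina inb inc)
lemma k1_f70991: "\<And>x9. x9\<in>A \<Longrightarrow> (m (p a (m b x9)) x9) = (m b (m x9 x9))"
  by (metis k1_f70831 ma cp cm ina inb inc)
lemma k1_f70992: "\<And>x9. x9\<in>A \<Longrightarrow> (m b x9) = (m (p a (m b x9)) x9)"
  by (metis k1_f70991 mi cp cm ina inb inc)
lemma k1_f71591: "\<And>x12 x13. x12\<in>A \<Longrightarrow> x13\<in>A \<Longrightarrow> (m (p (p a (m b x12)) x13) x12) = (p (m b x12) (m x13 x12))"
  by (metis dr k1_f70992 cp cm ina inb inc)
lemma k1_f71800: "\<And>x12 x13. x12\<in>A \<Longrightarrow> x13\<in>A \<Longrightarrow> (m (p (p a (m b x12)) x13) x12) = (m (p b x13) x12)"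
  by (metis dr k1_f71591 cp cm ina inb inc)
lemma k1_f71801: "\<And>x12 x13. x12\<in>A \<Longrightarrow> x13\<in>A \<Longrightarrow> (m (p b x13) x12) = (m (p a (p (m b x12) x13)) x12)"
  by (metis k1_f71800 pa cp cm ina inb inc)
lemma k1_f194493: "\<And>x6 x7 x5. x6\<in>A \<Longrightarrow> x7\<in>A \<Longrightarrow> x5\<in>A \<Longrightarrow> (m x7 x5) = (p (m x7 x5) (m x7 (m x5 (m x6 x5))))"
  by (metis k1_f2562 k1_f554 cp cm ina inb inc)
lemma k1_f194626: "\<And>x11 x12 x13. x11\<in>A \<Longrightarrow> x12\<in>A \<Longrightarrow> x13\<in>A \<Longrightarrow> (m x11 x12) = (m x11 (m x12 (m (p x11 x13) x12)))"
  by (metis k1_f194493 k1_f211 cp cm ina inb inc)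
lemma k1_f194881: "\<And>x13. x13\<in>A \<Longrightarrow> (m a x13) = (m a (m x13 (m b x13)))"
  by (metis k1_f194626 k1_f67728 cp cm ina inb inc)
lemma k1_f195395: "\<And>x1. x1\<in>A \<Longrightarrow> (m b x1) = (m a x1)"
  by (metis k1_f194881 k1_f64362 cp cm ina inb inc)
lemma k1_f195785: "\<And>x12 x13. x12\<in>A \<Longrightarrow> x13\<in>A \<Longrightarrow> (m (p b x13) x12) = (m (p a (p (m a x12) x13)) x12)"
  by (metis k1_f195395 k1_f71801 cp cm ina inb inc)
lemma k1_f196487: "\<And>x12 x13. x12\<in>A \<Longrightarrow> x13\<in>A \<Longrightarrow> (m (p b x13) x12) = (m (p a x13) x12)"
  by (metis k1_f195785 k1_f6975 cp cm ina inb inc)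
lemma k1_f206821: "\<And>x114. x114\<in>A \<Longrightarrow> (p b x114) = (m (p a x114) (p b x114))"
  by (metis k1_f196487 mi cp cm ina inb inc)

lemma k1_goal: "m (p a c) (p b c) = p b c" by (metis k1_f206821 cp cm ina inb inc)
lemma k2_f23: "\<And>x0 x1. x0\<in>A \<Longrightarrow> x1\<in>A \<Longrightarrow> (p (p (m x0 (m x1 x0)) x0) (m x0 (m x1 x0))) = x0"
  by (metis ma vd cp cm ina inb inc)
lemma k2_f24: "\<And>x0 x1. x0\<in>A \<Longrightarrow> x1\<in>A \<Longrightarrow> (p x0 x1) = (p x0 (p x0 x1))"
  by (metis pa pi cp cm ina inb inc)
lemma k2_f39: "\<And>x0 x1. x0\<in>A \<Longrightarrow> x1\<in>A \<Longrightarrow> (m x0 x1) = (m x0 (m x0 x1))"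
  by (metis ma mi cp cm ina inb inc)
lemma k2_f41: "\<And>x6. x6\<in>A \<Longrightarrow> (m b x6) = (m a (m b x6))"
  by (metis h1 ma cp cm ina inb inc)
lemma k2_f43: "\<And>x3 x4. x3\<in>A \<Longrightarrow> x4\<in>A \<Longrightarrow> (m x3 x4) = (m x3 (m x4 (m x3 x4)))"
  by (metis ma mi cp cm ina inb inc)
lemma k2_f49: "\<And>x3 x4 x5. x3\<in>A \<Longrightarrow> x4\<in>A \<Longrightarrow> x5\<in>A \<Longrightarrow> (m x3 (m x4 x5)) = (m (m x3 x4) (m x3 (m x4 x5)))"
  by (metis k2_f39 ma cp cm ina inb inc)
lemma k2_f128: "\<And>x0 x1. x0\<in>A \<Longrightarrow> x1\<in>A \<Longrightarrow> (m x0 (p x0 x1)) = (p x0 (m x0 x1))"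
  by (metis dl mi cp cm ina inb inc)
lemma k2_f129: "\<And>x2 x3 x4. x2\<in>A \<Longrightarrow> x3\<in>A \<Longrightarrow> x4\<in>A \<Longrightarrow> (m x2 (p (m x2 x3) x4)) = (p (m x2 x3) (m x2 x4))"
  by (metis dl k2_f39 cp cm ina inb inc)
lemma k2_f136: "\<And>x0 x1. x0\<in>A \<Longrightarrow> x1\<in>A \<Longrightarrow> (m x0 (p x1 x0)) = (p (m x0 x1) x0)"
  by (metis dl mi cp cm ina inb inc)
lemma k2_f137: "\<And>x2 x3 x4. x2\<in>A \<Longrightarrow> x3\<in>A \<Longrightarrow> x4\<in>A \<Longrightarrow> (m x2 (p x4 (m x2 x3))) = (p (m x2 x4) (m x2 x3))"
  by (metis dl k2_f39 cp cm ina inb inc)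
lemma k2_f141: "\<And>x14 x13. x14\<in>A \<Longrightarrow> x13\<in>A \<Longrightarrow> (m a (p x14 (m b x13))) = (p (m a x14) (m b x13))"
  by (metis dl k2_f41 cp cm ina inb inc)
lemma k2_f147: "\<And>x6 x7 x5. x6\<in>A \<Longrightarrow> x7\<in>A \<Longrightarrow> x5\<in>A \<Longrightarrow> (m x5 (p x6 x7)) = (p (m x5 x6) (m x5 (p x6 x7)))"
  by (metis dl k2_f24 cp cm ina inb inc)
lemma k2_f148: "\<And>x10 x11 x8 x9. x10\<in>A \<Longrightarrow> x11\<in>A \<Longrightarrow> x8\<in>A \<Longrightarrow> x9\<in>A \<Longrightarrow> (p (m x8 x9) (p (m x8 x10) x11)) = (p (m x8 (p x9 x10)) x11)"
  by (metis dl pa cp cm ina inb inc)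
lemma k2_f149: "\<And>x2 x3 x4. x2\<in>A \<Longrightarrow> x3\<in>A \<Longrightarrow> x4\<in>A \<Longrightarrow> (m x2 (p (m x2 x3) x4)) = (m x2 (p x3 x4))"
  by (metis dl k2_f129 cp cm ina inb inc)
lemma k2_f153: "\<And>x2 x3 x4. x2\<in>A \<Longrightarrow> x3\<in>A \<Longrightarrow> x4\<in>A \<Longrightarrow> (m x2 (p x4 (m x2 x3))) = (m x2 (p x4 x3))"
  by (metis dl k2_f137 cp cm ina inb inc)
lemma k2_f158: "\<And>x0 x1. x0\<in>A \<Longrightarrow> x1\<in>A \<Longrightarrow> (m (p x0 x1) x0) = (p x0 (m x1 x0))"
  by (metis dr mi cp cm ina inb inc)
lemma k2_f161: "\<And>x10 x11 x8 x9. x10\<in>A \<Longrightarrow> x11\<in>A \<Longrightarrow> x8\<in>A \<Longrightarrow> x9\<in>A \<Longrightarrow> (m (p (m x8 x9) x11) x10) = (p (m x8 (m x9 x10)) (m x11 x10))"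
  by (metis dr ma cp cm ina inb inc)
lemma k2_f164: "\<And>x15. x15\<in>A \<Longrightarrow> (m (p b x15) a) = (p a (m x15 a))"
  by (metis dr h2 cp cm ina inb inc)
lemma k2_f166: "\<And>x0 x1. x0\<in>A \<Longrightarrow> x1\<in>A \<Longrightarrow> (m (p x1 x0) x0) = (p (m x1 x0) x0)"
  by (metis dr mi cp cm ina inb inc)
lemma k2_f169: "\<And>x10 x11 x8 x9. x10\<in>A \<Longrightarrow> x11\<in>A \<Longrightarrow> x8\<in>A \<Longrightarrow> x9\<in>A \<Longrightarrow> (m (p x11 (m x8 x9)) x10) = (p (m x11 x10) (m x8 (m x9 x10)))"
  by (metis dr ma cp cm ina inb inc)
lemma k2_f170: "\<And>x12. x12\<in>A \<Longrightarrow> (m (p x12 a) b) = (p (m x12 b) b)"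
  by (metis dr h1 cp cm ina inb inc)
lemma k2_f180: "\<And>x10 x11 x12 x13. x10\<in>A \<Longrightarrow> x11\<in>A \<Longrightarrow> x12\<in>A \<Longrightarrow> x13\<in>A \<Longrightarrow> (p (m x10 x11) (p (m x12 x11) x13)) = (p (m (p x10 x12) x11) x13)"
  by (metis dr pa cp cm ina inb inc)
lemma k2_f191: "\<And>x11 x12 x13. x11\<in>A \<Longrightarrow> x12\<in>A \<Longrightarrow> x13\<in>A \<Longrightarrow> (p (m x11 x12) (m (m x11 x12) (m x13 x12))) = (m (m x11 x12) (m (p x11 x13) x12))"
  by (metis dr k2_f128 cp cm ina inb inc)
lemma k2_f210: "\<And>x11 x12 x13. x11\<in>A \<Longrightarrow> x12\<in>A \<Longrightarrow> x13\<in>A \<Longrightarrow> (p (m x11 x12) (m (m x11 x12) (m x13 x12))) = (m x11 (m x12 (m (p x11 x13) x12)))"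
  by (metis k2_f191 ma cp cm ina inb inc)
lemma k2_f211: "\<And>x11 x12 x13. x11\<in>A \<Longrightarrow> x12\<in>A \<Longrightarrow> x13\<in>A \<Longrightarrow> (m x11 (m x12 (m (p x11 x13) x12))) = (p (m x11 x12) (m x11 (m x12 (m x13 x12))))"
  by (metis k2_f210 ma cp cm ina inb inc)
lemma k2_f251: "\<And>x2 x1. x2\<in>A \<Longrightarrow> x1\<in>A \<Longrightarrow> (p (m (p x1 x2) x1) (p x1 x2)) = (m (p x1 x2) (p x1 x2))"
  by (metis k2_f136 k2_f24 cp cm ina inb inc)
lemma k2_f255: "\<And>x11 x12 x13. x11\<in>A \<Longrightarrow> x12\<in>A \<Longrightarrow> x13\<in>A \<Longrightarrow> (p (m (m x13 x12) (m x11 x12)) (m x13 x12)) = (m (m x13 x12) (m (p x11 x13) x12))"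
  by (metis dr k2_f136 cp cm ina inb inc)
lemma k2_f266: "\<And>x16 x17. x16\<in>A \<Longrightarrow> x17\<in>A \<Longrightarrow> (p (m x16 x17) x16) = (m x16 (p (m x16 x17) x16))"
  by (metis k2_f136 k2_f39 cp cm ina inb inc)
lemma k2_f274: "\<And>x2 x1. x2\<in>A \<Longrightarrow> x1\<in>A \<Longrightarrow> (p x1 x2) = (p (m (p x1 x2) x1) (p x1 x2))"
  by (metis k2_f251 mi cp cm ina inb inc)
lemma k2_f275: "\<And>x2 x1. x2\<in>A \<Longrightarrow> x1\<in>A \<Longrightarrow> (p x1 x2) = (p (p x1 (m x2 x1)) (p x1 x2))"
  by (metis k2_f158 k2_f274 cp cm ina inb inc)
lemma k2_f282: "\<And>x11 x12 x13. x11\<in>A \<Longrightarrow> x12\<in>A \<Longrightarrow> x13\<in>A \<Longrightarrow> (p (m (m x13 x12) (m x11 x12)) (m x13 x12)) = (m x13 (m x12 (m (p x11 x13) x12)))"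
  by (metis k2_f255 ma cp cm ina inb inc)
lemma k2_f283: "\<And>x11 x12 x13. x11\<in>A \<Longrightarrow> x12\<in>A \<Longrightarrow> x13\<in>A \<Longrightarrow> (m x13 (m x12 (m (p x11 x13) x12))) = (p (m x13 (m x12 (m x11 x12))) (m x13 x12))"
  by (metis k2_f282 ma cp cm ina inb inc)
lemma k2_f404: "\<And>x2 x3 x1. x2\<in>A \<Longrightarrow> x3\<in>A \<Longrightarrow> x1\<in>A \<Longrightarrow> (m (p x1 x2) (m x2 x3)) = (m (p (m x1 x2) x2) x3)"
  by (metis k2_f166 ma cp cm ina inb inc)
lemma k2_f499: "\<And>x10 x9. x10\<in>A \<Longrightarrow> x9\<in>A \<Longrightarrow> (p (p (m x9 (m x10 x9)) x9) (m (p (m x9 (m x10 x9)) x9) (m x9 (m x10 x9)))) = (m (p (m x9 (m x10 x9)) x9) x9)"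
  by (metis k2_f128 k2_f23 cp cm ina inb inc)
lemma k2_f540: "\<And>x10 x9. x10\<in>A \<Longrightarrow> x9\<in>A \<Longrightarrow> (p (p (m x9 (m x10 x9)) x9) (m (p (m x9 (m x10 x9)) x9) (m x9 (m x10 x9)))) = (p (m (m x9 (m x10 x9)) x9) x9)"
  by (metis k2_f166 k2_f499 cp cm ina inb inc)
lemma k2_f541: "\<And>x10 x9. x10\<in>A \<Longrightarrow> x9\<in>A \<Longrightarrow> (p (p (m x9 (m x10 x9)) x9) (m (p (m x9 (m x10 x9)) x9) (m x9 (m x10 x9)))) = (p (m x9 (m (m x10 x9) x9)) x9)"
  by (metis k2_f540 ma cp cm ina inb inc)
lemma k2_f542: "\<And>x10 x9. x10\<in>A \<Longrightarrow> x9\<in>A \<Longrightarrow> (p (p (m x9 (m x10 x9)) x9) (m (p (m x9 (m x10 x9)) x9) (m x9 (m x10 x9)))) = (p (m x9 (m x10 (m x9 x9))) x9)"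
  by (metis k2_f541 ma cp cm ina inb inc)
lemma k2_f543: "\<And>x10 x9. x10\<in>A \<Longrightarrow> x9\<in>A \<Longrightarrow> (p (m x9 (m x10 x9)) x9) = (p (p (m x9 (m x10 x9)) x9) (m (p (m x9 (m x10 x9)) x9) (m x9 (m x10 x9))))"
  by (metis k2_f542 mi cp cm ina inb inc)
lemma k2_f544: "\<And>x10 x9. x10\<in>A \<Longrightarrow> x9\<in>A \<Longrightarrow> (p (m x9 (m x10 x9)) x9) = (p (p (m x9 (m x10 x9)) x9) (p (m x9 (m x10 x9)) (m x9 (m x9 (m x10 x9)))))"
  by (metis k2_f158 k2_f543 cp cm ina inb inc)
lemma k2_f545: "\<And>x10 x9. x10\<in>A \<Longrightarrow> x9\<in>A \<Longrightarrow> (p (m x9 (m x10 x9)) x9) = (p (p (m x9 (m x10 x9)) x9) (m x9 (p (m x10 x9) (m x9 (m x10 x9)))))"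
  by (metis dl k2_f544 cp cm ina inb inc)
lemma k2_f546: "\<And>x10 x9. x10\<in>A \<Longrightarrow> x9\<in>A \<Longrightarrow> (p (m x9 (m x10 x9)) x9) = (p (p (m x9 (m x10 x9)) x9) (m x9 (p (m x10 x9) (m x10 x9))))"
  by (metis k2_f153 k2_f545 cp cm ina inb inc)
lemma k2_f547: "\<And>x10 x9. x10\<in>A \<Longrightarrow> x9\<in>A \<Longrightarrow> (p (m x9 (m x10 x9)) x9) = (p (p (m x9 (m x10 x9)) x9) (m x9 (m x10 x9)))"
  by (metis k2_f546 pi cp cm ina inb inc)
lemma k2_f548: "\<And>x10 x9. x10\<in>A \<Longrightarrow> x9\<in>A \<Longrightarrow> (p (m x9 (m x10 x9)) x9) = x9"
  by (metis k2_f23 k2_f547 cp cm ina inb inc)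
lemma k2_f554: "\<And>x0 x1. x0\<in>A \<Longrightarrow> x1\<in>A \<Longrightarrow> (p x0 (m x0 (m x1 x0))) = x0"
  by (metis k2_f23 k2_f548 cp cm ina inb inc)
lemma k2_f625: "\<And>x20. x20\<in>A \<Longrightarrow> (m b a) = (p a (m (m b (m x20 b)) a))"
  by (metis k2_f164 k2_f554 cp cm ina inb inc)
lemma k2_f663: "\<And>x20. x20\<in>A \<Longrightarrow> (m b a) = (p a (m b (m (m x20 b) a)))"
  by (metis k2_f625 ma cp cm ina inb inc)
lemma k2_f664: "\<And>x20. x20\<in>A \<Longrightarrow> (m b a) = (p a (m b (m x20 (m b a))))"
  by (metis k2_f663 ma cp cm ina inb inc)
lemma k2_f665: "\<And>x20. x20\<in>A \<Longrightarrow> a = (p a (m b (m x20 a)))"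
  by (metis h2 k2_f664 cp cm ina inb inc)
lemma k2_f679: "\<And>x18 x19 x17. x18\<in>A \<Longrightarrow> x19\<in>A \<Longrightarrow> x17\<in>A \<Longrightarrow> (p (m x19 (m x17 (m x18 x19))) x19) = x19"
  by (metis k2_f548 ma cp cm ina inb inc)
lemma k2_f699: "\<And>x15. x15\<in>A \<Longrightarrow> (m a b) = (p (m (m a (m x15 a)) b) b)"
  by (metis k2_f170 k2_f548 cp cm ina inb inc)
lemma k2_f742: "\<And>x15. x15\<in>A \<Longrightarrow> (m a b) = (p (m a (m (m x15 a) b)) b)"
  by (metis k2_f699 ma cp cm ina inb inc)
lemma k2_f743: "\<And>x15. x15\<in>A \<Longrightarrow> (m a b) = (p (m a (m x15 (m a b))) b)"
  by (metis k2_f742 ma cp cm ina inb inc)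
lemma k2_f744: "\<And>x15. x15\<in>A \<Longrightarrow> b = (p (m a (m x15 b)) b)"
  by (metis h1 k2_f743 cp cm ina inb inc)
lemma k2_f991: "\<And>x18 x19 x17. x18\<in>A \<Longrightarrow> x19\<in>A \<Longrightarrow> x17\<in>A \<Longrightarrow> (p (m x18 (m x19 (p (m x17 x18) x18))) x18) = x18"
  by (metis k2_f166 k2_f679 cp cm ina inb inc)
lemma k2_f1347: "\<And>x18 x17. x18\<in>A \<Longrightarrow> x17\<in>A \<Longrightarrow> (m x17 (p x18 (m x17 x18))) = (m x17 (m x17 x18))"
  by (metis k2_f149 pi cp cm ina inb inc)
lemma k2_f1358: "\<And>x2 x3 x4 x5. x2\<in>A \<Longrightarrow> x3\<in>A \<Longrightarrow> x4\<in>A \<Longrightarrow> x5\<in>A \<Longrightarrow> (m x2 (m (p (m x2 x3) x4) x5)) = (m (m x2 (p x3 x4)) x5)"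
  by (metis k2_f149 ma cp cm ina inb inc)
lemma k2_f1408: "\<And>x18 x17. x18\<in>A \<Longrightarrow> x17\<in>A \<Longrightarrow> (m x17 x18) = (m x17 (p x18 (m x17 x18)))"
  by (metis k2_f1347 k2_f39 cp cm ina inb inc)
lemma k2_f1423: "\<And>x2 x3 x4 x5. x2\<in>A \<Longrightarrow> x3\<in>A \<Longrightarrow> x4\<in>A \<Longrightarrow> x5\<in>A \<Longrightarrow> (m x2 (m (p (m x2 x3) x4) x5)) = (m x2 (m (p x3 x4) x5))"
  by (metis k2_f1358 ma cp cm ina inb inc)
lemma k2_f2434: "\<And>x31 x32 x30. x31\<in>A \<Longrightarrow> x32\<in>A \<Longrightarrow> x30\<in>A \<Longrightarrow> (p (m x30 (p x32 x31)) (m x30 x31)) = (p (m x30 x32) (m x30 x31))"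
  by (metis k2_f148 pi cp cm ina inb inc)
lemma k2_f2562: "\<And>x31 x32 x30. x31\<in>A \<Longrightarrow> x32\<in>A \<Longrightarrow> x30\<in>A \<Longrightarrow> (m x30 (p x32 x31)) = (p (m x30 (p x32 x31)) (m x30 x31))"
  by (metis dl k2_f2434 cp cm ina inb inc)
lemma k2_f3639: "\<And>x2 x0 x1. x2\<in>A \<Longrightarrow> x0\<in>A \<Longrightarrow> x1\<in>A \<Longrightarrow> (m (p (m x1 x0) x2) x0) = (p (m x1 x0) (m x2 x0))"
  by (metis k2_f161 mi cp cm ina inb inc)
lemma k2_f3661: "\<And>x88 x89. x88\<in>A \<Longrightarrow> x89\<in>A \<Longrightarrow> (m (p (m x88 a) x89) b) = (p (m x88 b) (m x89 b))"
  by (metis h1 k2_f161 cp cm ina inb inc)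
lemma k2_f3672: "\<And>x120 x121. x120\<in>A \<Longrightarrow> x121\<in>A \<Longrightarrow> (m (p (m x120 b) x121) a) = (p (m x120 a) (m x121 a))"
  by (metis h2 k2_f161 cp cm ina inb inc)
lemma k2_f3752: "\<And>x2 x0 x1. x2\<in>A \<Longrightarrow> x0\<in>A \<Longrightarrow> x1\<in>A \<Longrightarrow> (m (p (m x1 x0) x2) x0) = (m (p x1 x2) x0)"
  by (metis dr k2_f3639 cp cm ina inb inc)
lemma k2_f3759: "\<And>x88 x89. x88\<in>A \<Longrightarrow> x89\<in>A \<Longrightarrow> (m (p (m x88 a) x89) b) = (m (p x88 x89) b)"
  by (metis dr k2_f3661 cp cm ina inb inc)
lemma k2_f3763: "\<And>x120 x121. x120\<in>A \<Longrightarrow> x121\<in>A \<Longrightarrow> (m (p (m x120 b) x121) a) = (m (p x120 x121) a)"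
  by (metis dr k2_f3672 cp cm ina inb inc)
lemma k2_f4464: "\<And>x2 x3 x4. x2\<in>A \<Longrightarrow> x3\<in>A \<Longrightarrow> x4\<in>A \<Longrightarrow> (m (p (m (m x2 x3) x4) x2) x3) = (m (m x2 x3) (m (p (m (m x2 x3) x4) x2) x3))"
  by (metis k2_f161 k2_f266 cp cm ina inb inc)
lemma k2_f4550: "\<And>x2 x3 x4. x2\<in>A \<Longrightarrow> x3\<in>A \<Longrightarrow> x4\<in>A \<Longrightarrow> (m (p (m (m x2 x3) x4) x2) x3) = (m (m x2 x3) (m (p x4 x2) x3))"
  by (metis k2_f1423 k2_f4464 cp cm ina inb inc)
lemma k2_f4551: "\<And>x2 x3 x4. x2\<in>A \<Longrightarrow> x3\<in>A \<Longrightarrow> x4\<in>A \<Longrightarrow> (m (p (m (m x2 x3) x4) x2) x3) = (m x2 (m x3 (m (p x4 x2) x3)))"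
  by (metis k2_f4550 ma cp cm ina inb inc)
lemma k2_f4552: "\<And>x2 x3 x4. x2\<in>A \<Longrightarrow> x3\<in>A \<Longrightarrow> x4\<in>A \<Longrightarrow> (m x2 (m x3 (m (p x4 x2) x3))) = (m (p (m x2 (m x3 x4)) x2) x3)"
  by (metis k2_f4551 ma cp cm ina inb inc)
lemma k2_f5365: "\<And>x2 x0 x1. x2\<in>A \<Longrightarrow> x0\<in>A \<Longrightarrow> x1\<in>A \<Longrightarrow> (p (m x1 x0) (m x2 x0)) = (m (p x1 (m x2 x0)) x0)"
  by (metis k2_f169 mi cp cm ina inb inc)
lemma k2_f5467: "\<And>x2 x0 x1. x2\<in>A \<Longrightarrow> x0\<in>A \<Longrightarrow> x1\<in>A \<Longrightarrow> (m (p x1 x2) x0) = (m (p x1 (m x2 x0)) x0)"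
  by (metis dr k2_f5365 cp cm ina inb inc)
lemma k2_f6807: "\<And>x8 x6 x9 x7. x8\<in>A \<Longrightarrow> x6\<in>A \<Longrightarrow> x9\<in>A \<Longrightarrow> x7\<in>A \<Longrightarrow> (m (p x6 (m x8 (m x9 x7))) x7) = (m (m (p x6 (m x8 x9)) x7) x7)"
  by (metis k2_f169 k2_f3752 cp cm ina inb inc)
lemma k2_f6812: "\<And>x23. x23\<in>A \<Longrightarrow> (m b (m x23 b)) = (m (p a b) (m x23 b))"
  by (metis k2_f3752 k2_f744 cp cm ina inb inc)
lemma k2_f6816: "\<And>x29 x30. x29\<in>A \<Longrightarrow> x30\<in>A \<Longrightarrow> (m (p x29 (m x29 x30)) x30) = (m (m x29 x30) x30)"
  by (metis k2_f3752 pi cp cm ina inb inc)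
lemma k2_f6970: "\<And>x8 x6 x9 x7. x8\<in>A \<Longrightarrow> x6\<in>A \<Longrightarrow> x9\<in>A \<Longrightarrow> x7\<in>A \<Longrightarrow> (m (p x6 (m x8 (m x9 x7))) x7) = (m (p x6 (m x8 x9)) (m x7 x7))"
  by (metis k2_f6807 ma cp cm ina inb inc)
lemma k2_f6971: "\<And>x8 x6 x9 x7. x8\<in>A \<Longrightarrow> x6\<in>A \<Longrightarrow> x9\<in>A \<Longrightarrow> x7\<in>A \<Longrightarrow> (m (p x6 (m x8 x9)) x7) = (m (p x6 (m x8 (m x9 x7))) x7)"
  by (metis k2_f6970 mi cp cm ina inb inc)
lemma k2_f6973: "\<And>x29 x30. x29\<in>A \<Longrightarrow> x30\<in>A \<Longrightarrow> (m (p x29 (m x29 x30)) x30) = (m x29 (m x30 x30))"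
  by (metis k2_f6816 ma cp cm ina inb inc)
lemma k2_f6974: "\<And>x29 x30. x29\<in>A \<Longrightarrow> x30\<in>A \<Longrightarrow> (m x29 x30) = (m (p x29 (m x29 x30)) x30)"
  by (metis k2_f6973 mi cp cm ina inb inc)
lemma k2_f7089: "\<And>x24 x25 x23. x24\<in>A \<Longrightarrow> x25\<in>A \<Longrightarrow> x23\<in>A \<Longrightarrow> (m (m x23 (m x24 x25)) x25) = (m (m (p (m x23 x24) (m x23 (m x24 x25))) x25) x25)"
  by (metis k2_f161 k2_f6974 cp cm ina inb inc)
lemma k2_f7197: "\<And>x24 x25 x23. x24\<in>A \<Longrightarrow> x25\<in>A \<Longrightarrow> x23\<in>A \<Longrightarrow> (m (m x23 (m x24 x25)) x25) = (m (m (p (m x23 x24) (m x23 x24)) x25) x25)"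
  by (metis k2_f6971 k2_f7089 cp cm ina inb inc)
lemma k2_f7198: "\<And>x24 x25 x23. x24\<in>A \<Longrightarrow> x25\<in>A \<Longrightarrow> x23\<in>A \<Longrightarrow> (m (m x23 (m x24 x25)) x25) = (m (m (m x23 x24) x25) x25)"
  by (metis k2_f7197 pi cp cm ina inb inc)
lemma k2_f7199: "\<And>x24 x25 x23. x24\<in>A \<Longrightarrow> x25\<in>A \<Longrightarrow> x23\<in>A \<Longrightarrow> (m (m x23 (m x24 x25)) x25) = (m (m x23 x24) (m x25 x25))"
  by (metis k2_f7198 ma cp cm ina inb inc)
lemma k2_f7200: "\<And>x24 x25 x23. x24\<in>A \<Longrightarrow> x25\<in>A \<Longrightarrow> x23\<in>A \<Longrightarrow> (m (m x23 (m x24 x25)) x25) = (m x23 (m x24 (m x25 x25)))"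
  by (metis k2_f7199 ma cp cm ina inb inc)
lemma k2_f7201: "\<And>x24 x25 x23. x24\<in>A \<Longrightarrow> x25\<in>A \<Longrightarrow> x23\<in>A \<Longrightarrow> (m x23 (m x24 x25)) = (m (m x23 (m x24 x25)) x25)"
  by (metis k2_f7200 mi cp cm ina inb inc)
lemma k2_f7765: "\<And>x46 x47 x45. x46\<in>A \<Longrightarrow> x47\<in>A \<Longrightarrow> x45\<in>A \<Longrightarrow> (p (m (p x47 x45) x46) (m x45 x46)) = (p (m x47 x46) (m x45 x46))"
  by (metis k2_f180 pi cp cm ina inb inc)
lemma k2_f7940: "\<And>x46 x47 x45. x46\<in>A \<Longrightarrow> x47\<in>A \<Longrightarrow> x45\<in>A \<Longrightarrow> (m (p x47 x45) x46) = (p (m (p x47 x45) x46) (m x45 x46))"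
  by (metis dr k2_f7765 cp cm ina inb inc)
lemma k2_f9664: "\<And>x15. x15\<in>A \<Longrightarrow> (m (m x15 a) b) = (m (p x15 (m x15 a)) b)"
  by (metis k2_f3759 pi cp cm ina inb inc)
lemma k2_f9764: "\<And>x15. x15\<in>A \<Longrightarrow> (m x15 (m a b)) = (m (p x15 (m x15 a)) b)"
  by (metis k2_f9664 ma cp cm ina inb inc)
lemma k2_f9765: "\<And>x15. x15\<in>A \<Longrightarrow> (m x15 b) = (m (p x15 (m x15 a)) b)"
  by (metis h1 k2_f9764 cp cm ina inb inc)
lemma k2_f9837: "\<And>x3 x4. x3\<in>A \<Longrightarrow> x4\<in>A \<Longrightarrow> (m (m x3 (m x4 a)) b) = (m (m (p (m x3 x4) (m x3 (m x4 a))) a) b)"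
  by (metis k2_f161 k2_f9765 cp cm ina inb inc)
lemma k2_f9838: "\<And>x1. x1\<in>A \<Longrightarrow> (m (m x1 a) b) = (m (p x1 (m (m x1 a) a)) b)"
  by (metis k2_f3759 k2_f9765 cp cm ina inb inc)
lemma k2_f9923: "\<And>x3 x4. x3\<in>A \<Longrightarrow> x4\<in>A \<Longrightarrow> (m (m x3 (m x4 a)) b) = (m (m (p (m x3 x4) (m x3 x4)) a) b)"
  by (metis k2_f6971 k2_f9837 cp cm ina inb inc)
lemma k2_f9924: "\<And>x3 x4. x3\<in>A \<Longrightarrow> x4\<in>A \<Longrightarrow> (m (m x3 (m x4 a)) b) = (m (m (m x3 x4) a) b)"
  by (metis k2_f9923 pi cp cm ina inb inc)
lemma k2_f9925: "\<And>x3 x4. x3\<in>A \<Longrightarrow> x4\<in>A \<Longrightarrow> (m (m x3 (m x4 a)) b) = (m (m x3 x4) (m a b))"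
  by (metis k2_f9924 ma cp cm ina inb inc)
lemma k2_f9926: "\<And>x3 x4. x3\<in>A \<Longrightarrow> x4\<in>A \<Longrightarrow> (m (m x3 (m x4 a)) b) = (m x3 (m x4 (m a b)))"
  by (metis k2_f9925 ma cp cm ina inb inc)
lemma k2_f9927: "\<And>x3 x4. x3\<in>A \<Longrightarrow> x4\<in>A \<Longrightarrow> (m x3 (m x4 b)) = (m (m x3 (m x4 a)) b)"
  by (metis h1 k2_f9926 cp cm ina inb inc)
lemma k2_f9928: "\<And>x1. x1\<in>A \<Longrightarrow> (m (m x1 a) b) = (m (p x1 (m x1 (m a a))) b)"
  by (metis k2_f9838 ma cp cm ina inb inc)
lemma k2_f9929: "\<And>x1. x1\<in>A \<Longrightarrow> (m (m x1 a) b) = (m (p x1 (m x1 a)) b)"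
  by (metis k2_f9928 mi cp cm ina inb inc)
lemma k2_f9930: "\<And>x1. x1\<in>A \<Longrightarrow> (m x1 b) = (m (m x1 a) b)"
  by (metis k2_f9765 k2_f9929 cp cm ina inb inc)
lemma k2_f10009: "\<And>x16 x17. x16\<in>A \<Longrightarrow> x17\<in>A \<Longrightarrow> (m (m x16 a) (m b x17)) = (m (m x16 b) x17)"
  by (metis k2_f9930 ma cp cm ina inb inc)
lemma k2_f10060: "\<And>x16 x17. x16\<in>A \<Longrightarrow> x17\<in>A \<Longrightarrow> (m (m x16 a) (m b x17)) = (m x16 (m b x17))"
  by (metis k2_f10009 ma cp cm ina inb inc)
lemma k2_f10800: "\<And>x15. x15\<in>A \<Longrightarrow> (m (p x15 (m x15 b)) a) = (m (m x15 b) a)"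
  by (metis k2_f3763 pi cp cm ina inb inc)
lemma k2_f10916: "\<And>x15. x15\<in>A \<Longrightarrow> (m (p x15 (m x15 b)) a) = (m x15 (m b a))"
  by (metis k2_f10800 ma cp cm ina inb inc)
lemma k2_f10917: "\<And>x15. x15\<in>A \<Longrightarrow> (m x15 a) = (m (p x15 (m x15 b)) a)"
  by (metis h2 k2_f10916 cp cm ina inb inc)
lemma k2_f11003: "\<And>x3 x4. x3\<in>A \<Longrightarrow> x4\<in>A \<Longrightarrow> (m (m x3 (m x4 b)) a) = (m (m (p (m x3 x4) (m x3 (m x4 b))) b) a)"
  by (metis k2_f10917 k2_f161 cp cm ina inb inc)
lemma k2_f11110: "\<And>x3 x4. x3\<in>A \<Longrightarrow> x4\<in>A \<Longrightarrow> (m (m x3 (m x4 b)) a) = (m (m (p (m x3 x4) (m x3 x4)) b) a)"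
  by (metis k2_f11003 k2_f6971 cp cm ina inb inc)
lemma k2_f11111: "\<And>x3 x4. x3\<in>A \<Longrightarrow> x4\<in>A \<Longrightarrow> (m (m x3 (m x4 b)) a) = (m (m (m x3 x4) b) a)"
  by (metis k2_f11110 pi cp cm ina inb inc)
lemma k2_f11112: "\<And>x3 x4. x3\<in>A \<Longrightarrow> x4\<in>A \<Longrightarrow> (m (m x3 (m x4 b)) a) = (m (m x3 x4) (m b a))"
  by (metis k2_f11111 ma cp cm ina inb inc)
lemma k2_f11113: "\<And>x3 x4. x3\<in>A \<Longrightarrow> x4\<in>A \<Longrightarrow> (m (m x3 (m x4 b)) a) = (m x3 (m x4 (m b a)))"
  by (metis k2_f11112 ma cp cm ina inb inc)
lemma k2_f11114: "\<And>x3 x4. x3\<in>A \<Longrightarrow> x4\<in>A \<Longrightarrow> (m x3 (m x4 a)) = (m (m x3 (m x4 b)) a)"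
  by (metis h2 k2_f11113 cp cm ina inb inc)
lemma k2_f12743: "\<And>x41 x44 x42 x43. x41\<in>A \<Longrightarrow> x44\<in>A \<Longrightarrow> x42\<in>A \<Longrightarrow> x43\<in>A \<Longrightarrow> (m (m x41 x42) x42) = (m (p (m (m x41 x42) (m x43 (m x44 (m x41 x42)))) x41) x42)"
  by (metis k2_f5467 k2_f679 cp cm ina inb inc)
lemma k2_f12744: "\<And>x45. x45\<in>A \<Longrightarrow> (m (p a b) (m x45 a)) = (m a (m x45 a))"
  by (metis k2_f5467 k2_f665 cp cm ina inb inc)
lemma k2_f12938: "\<And>x41 x44 x42 x43. x41\<in>A \<Longrightarrow> x44\<in>A \<Longrightarrow> x42\<in>A \<Longrightarrow> x43\<in>A \<Longrightarrow> (m (m x41 x42) x42) = (m (p (m x41 (m x42 (m x43 (m x44 (m x41 x42))))) x41) x42)"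
  by (metis k2_f12743 ma cp cm ina inb inc)
lemma k2_f12939: "\<And>x41 x44 x42 x43. x41\<in>A \<Longrightarrow> x44\<in>A \<Longrightarrow> x42\<in>A \<Longrightarrow> x43\<in>A \<Longrightarrow> (m x41 (m x42 x42)) = (m (p (m x41 (m x42 (m x43 (m x44 (m x41 x42))))) x41) x42)"
  by (metis k2_f12938 ma cp cm ina inb inc)
lemma k2_f12940: "\<And>x41 x44 x42 x43. x41\<in>A \<Longrightarrow> x44\<in>A \<Longrightarrow> x42\<in>A \<Longrightarrow> x43\<in>A \<Longrightarrow> (m x41 x42) = (m (p (m x41 (m x42 (m x43 (m x44 (m x41 x42))))) x41) x42)"
  by (metis k2_f12939 mi cp cm ina inb inc)
lemma k2_f19333: "\<And>x86 x87 x84 x85. x86\<in>A \<Longrightarrow> x87\<in>A \<Longrightarrow> x84\<in>A \<Longrightarrow> x85\<in>A \<Longrightarrow> (m (m x84 x85) x85) = (m (p (m (m x84 x85) (m x86 (p (m x87 (m x84 x85)) (m x84 x85)))) x84) x85)"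
  by (metis k2_f5467 k2_f991 cp cm ina inb inc)
lemma k2_f19583: "\<And>x86 x87 x84 x85. x86\<in>A \<Longrightarrow> x87\<in>A \<Longrightarrow> x84\<in>A \<Longrightarrow> x85\<in>A \<Longrightarrow> (m (m x84 x85) x85) = (m (p (m x84 (m x85 (m x86 (p (m x87 (m x84 x85)) (m x84 x85))))) x84) x85)"
  by (metis k2_f19333 ma cp cm ina inb inc)
lemma k2_f19584: "\<And>x86 x87 x84 x85. x86\<in>A \<Longrightarrow> x87\<in>A \<Longrightarrow> x84\<in>A \<Longrightarrow> x85\<in>A \<Longrightarrow> (m (m x84 x85) x85) = (m (p (m x84 (m x85 (m x86 (m (p (m x87 x84) x84) x85)))) x84) x85)"
  by (metis k2_f161 k2_f19583 cp cm ina inb inc)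
lemma k2_f19585: "\<And>x86 x87 x84 x85. x86\<in>A \<Longrightarrow> x87\<in>A \<Longrightarrow> x84\<in>A \<Longrightarrow> x85\<in>A \<Longrightarrow> (m (m x84 x85) x85) = (m (p (m x84 (m x85 (m x86 (m (p x87 x84) (m x84 x85))))) x84) x85)"
  by (metis k2_f19584 k2_f404 cp cm ina inb inc)
lemma k2_f19586: "\<And>x84 x85. x84\<in>A \<Longrightarrow> x85\<in>A \<Longrightarrow> (m x84 x85) = (m (m x84 x85) x85)"
  by (metis k2_f12940 k2_f19585 cp cm ina inb inc)
lemma k2_f19715: "\<And>x6 x4 x5. x6\<in>A \<Longrightarrow> x4\<in>A \<Longrightarrow> x5\<in>A \<Longrightarrow> (m (m x4 x5) (m x5 x6)) = (m (m x4 x5) x6)"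
  by (metis k2_f19586 ma cp cm ina inb inc)
lemma k2_f19829: "\<And>x6 x4 x5. x6\<in>A \<Longrightarrow> x4\<in>A \<Longrightarrow> x5\<in>A \<Longrightarrow> (m x4 (m x5 x6)) = (m (m x4 x5) (m x5 x6))"
  by (metis k2_f19715 ma cp cm ina inb inc)
lemma k2_f25465: "\<And>x14 x15. x14\<in>A \<Longrightarrow> x15\<in>A \<Longrightarrow> (m x14 x15) = (m (m (m x14 x15) x14) (m x14 x15))"
  by (metis k2_f49 mi cp cm ina inb inc)
lemma k2_f25690: "\<And>x14 x15. x14\<in>A \<Longrightarrow> x15\<in>A \<Longrightarrow> (m x14 x15) = (m (m x14 (m x15 x14)) (m x14 x15))"
  by (metis k2_f25465 ma cp cm ina inb inc)
lemma k2_f26043: "\<And>x119. x119\<in>A \<Longrightarrow> (m b x119) = (m (m a (m (m b x119) a)) (m b x119))"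
  by (metis k2_f25690 k2_f41 cp cm ina inb inc)
lemma k2_f26602: "\<And>x119. x119\<in>A \<Longrightarrow> (m b x119) = (m (m a (m b (m x119 a))) (m b x119))"
  by (metis k2_f26043 ma cp cm ina inb inc)
lemma k2_f26603: "\<And>x119. x119\<in>A \<Longrightarrow> (m b x119) = (m (m b (m x119 a)) (m b x119))"
  by (metis k2_f26602 k2_f41 cp cm ina inb inc)
lemma k2_f49299: "\<And>x3. x3\<in>A \<Longrightarrow> (m (p a b) (m x3 b)) = (m (m a (m x3 a)) b)"
  by (metis k2_f12744 k2_f9927 cp cm ina inb inc)
lemma k2_f49637: "\<And>x3. x3\<in>A \<Longrightarrow> (m (p a b) (m x3 b)) = (m a (m (m x3 a) b))"
  by (metis k2_f49299 ma cp cm ina inb inc)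
lemma k2_f49638: "\<And>x3. x3\<in>A \<Longrightarrow> (m (p a b) (m x3 b)) = (m a (m x3 (m a b)))"
  by (metis k2_f49637 ma cp cm ina inb inc)
lemma k2_f49639: "\<And>x3. x3\<in>A \<Longrightarrow> (m a (m x3 b)) = (m (p a b) (m x3 b))"
  by (metis h1 k2_f49638 cp cm ina inb inc)
lemma k2_f49640: "\<And>x23. x23\<in>A \<Longrightarrow> (m b (m x23 b)) = (m a (m x23 b))"
  by (metis k2_f49639 k2_f6812 cp cm ina inb inc)
lemma k2_f50673: "\<And>x96 x94 x95. x96\<in>A \<Longrightarrow> x94\<in>A \<Longrightarrow> x95\<in>A \<Longrightarrow> (m x96 x94) = (p (m x96 (m x94 (m x95 x94))) (m x96 x94))"
  by (metis k2_f147 k2_f548 cp cm ina inb inc)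
lemma k2_f51105: "\<And>x11 x12 x13. x11\<in>A \<Longrightarrow> x12\<in>A \<Longrightarrow> x13\<in>A \<Longrightarrow> (m x13 x12) = (m x13 (m x12 (m (p x11 x13) x12)))"
  by (metis k2_f283 k2_f50673 cp cm ina inb inc)
lemma k2_f51106: "\<And>x2 x3 x4. x2\<in>A \<Longrightarrow> x3\<in>A \<Longrightarrow> x4\<in>A \<Longrightarrow> (m x2 x3) = (m (p (m x2 (m x3 x4)) x2) x3)"
  by (metis k2_f4552 k2_f51105 cp cm ina inb inc)
lemma k2_f51366: "\<And>x28 x26 x27. x28\<in>A \<Longrightarrow> x26\<in>A \<Longrightarrow> x27\<in>A \<Longrightarrow> (m (m x26 (m x27 x26)) x28) = (m (m x26 (m x27 x26)) (m x28 (m x26 x28)))"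
  by (metis k2_f51105 k2_f554 cp cm ina inb inc)
lemma k2_f51397: "\<And>x145 x144. x145\<in>A \<Longrightarrow> x144\<in>A \<Longrightarrow> (m (m b (m x144 a)) x145) = (m (m b (m x144 a)) (m x145 (m a x145)))"
  by (metis k2_f51105 k2_f665 cp cm ina inb inc)
lemma k2_f51581: "\<And>x78 x76 x77. x78\<in>A \<Longrightarrow> x76\<in>A \<Longrightarrow> x77\<in>A \<Longrightarrow> (m x76 x77) = (m (m x76 x77) (m (p x78 x76) x77))"
  by (metis k2_f51105 k2_f7201 cp cm ina inb inc)
lemma k2_f51749: "\<And>x28 x26 x27. x28\<in>A \<Longrightarrow> x26\<in>A \<Longrightarrow> x27\<in>A \<Longrightarrow> (m x26 (m (m x27 x26) x28)) = (m (m x26 (m x27 x26)) (m x28 (m x26 x28)))"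
  by (metis k2_f51366 ma cp cm ina inb inc)
lemma k2_f51750: "\<And>x28 x26 x27. x28\<in>A \<Longrightarrow> x26\<in>A \<Longrightarrow> x27\<in>A \<Longrightarrow> (m (m x26 (m x27 x26)) (m x28 (m x26 x28))) = (m x26 (m x27 (m x26 x28)))"
  by (metis k2_f51749 ma cp cm ina inb inc)
lemma k2_f51782: "\<And>x145 x144. x145\<in>A \<Longrightarrow> x144\<in>A \<Longrightarrow> (m (m b (m x144 a)) (m x145 (m a x145))) = (m b (m (m x144 a) x145))"
  by (metis k2_f51397 ma cp cm ina inb inc)
lemma k2_f51783: "\<And>x145 x144. x145\<in>A \<Longrightarrow> x144\<in>A \<Longrightarrow> (m (m b (m x144 a)) (m x145 (m a x145))) = (m b (m x144 (m a x145)))"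
  by (metis k2_f51782 ma cp cm ina inb inc)
lemma k2_f58390: "\<And>x48. x48\<in>A \<Longrightarrow> (m b (m x48 a)) = (m (m a (m x48 b)) a)"
  by (metis k2_f11114 k2_f49640 cp cm ina inb inc)
lemma k2_f58802: "\<And>x48. x48\<in>A \<Longrightarrow> (m a (m x48 a)) = (m b (m x48 a))"
  by (metis k2_f11114 k2_f58390 cp cm ina inb inc)
lemma k2_f58876: "\<And>x119. x119\<in>A \<Longrightarrow> (m b x119) = (m (m a (m x119 a)) (m b x119))"
  by (metis k2_f26603 k2_f58802 cp cm ina inb inc)
lemma k2_f58881: "\<And>x145 x144. x145\<in>A \<Longrightarrow> x144\<in>A \<Longrightarrow> (m b (m x144 (m a x145))) = (m (m a (m x144 a)) (m x145 (m a x145)))"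
  by (metis k2_f51783 k2_f58802 cp cm ina inb inc)
lemma k2_f58896: "\<And>x145 x144. x145\<in>A \<Longrightarrow> x144\<in>A \<Longrightarrow> (m b (m x144 (m a x145))) = (m a (m x144 (m a x145)))"
  by (metis k2_f51750 k2_f58881 cp cm ina inb inc)
lemma k2_f59164: "\<And>x68. x68\<in>A \<Longrightarrow> (m b x68) = (m (p (m a (m x68 a)) b) x68)"
  by (metis k2_f51106 k2_f58802 cp cm ina inb inc)
lemma k2_f65462: "\<And>x1. x1\<in>A \<Longrightarrow> (m b x1) = (m a (m (m x1 a) (m b x1)))"
  by (metis k2_f58876 ma cp cm ina inb inc)
lemma k2_f65822: "\<And>x1. x1\<in>A \<Longrightarrow> (m b x1) = (m a (m x1 (m a (m b x1))))"
  by (metis k2_f65462 ma cp cm ina inb inc)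
lemma k2_f65823: "\<And>x1. x1\<in>A \<Longrightarrow> (m b x1) = (m a (m x1 (m b x1)))"
  by (metis k2_f41 k2_f65822 cp cm ina inb inc)
lemma k2_f66041: "\<And>x56. x56\<in>A \<Longrightarrow> (m b x56) = (m (m a x56) (m b x56))"
  by (metis k2_f49 k2_f65823 cp cm ina inb inc)
lemma k2_f66415: "\<And>x156. x156\<in>A \<Longrightarrow> (m (m b x156) (m a x156)) = (m (m (m b x156) (m b x156)) (m (m b x156) (m a x156)))"
  by (metis k2_f25690 k2_f66041 cp cm ina inb inc)
lemma k2_f66888: "\<And>x156. x156\<in>A \<Longrightarrow> (m b (m x156 (m a x156))) = (m (m (m b x156) (m b x156)) (m b (m x156 (m a x156))))"
  by (metis k2_f66415 ma cp cm ina inb inc)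
lemma k2_f66889: "\<And>x156. x156\<in>A \<Longrightarrow> (m a (m x156 (m a x156))) = (m (m (m b x156) (m b x156)) (m a (m x156 (m a x156))))"
  by (metis k2_f58896 k2_f66888 cp cm ina inb inc)
lemma k2_f66890: "\<And>x156. x156\<in>A \<Longrightarrow> (m a x156) = (m (m (m b x156) (m b x156)) (m a x156))"
  by (metis k2_f43 k2_f66889 cp cm ina inb inc)
lemma k2_f66891: "\<And>x156. x156\<in>A \<Longrightarrow> (m a x156) = (m (m b x156) (m a x156))"
  by (metis k2_f66890 mi cp cm ina inb inc)
lemma k2_f69141: "\<And>x54. x54\<in>A \<Longrightarrow> (m a (p x54 (m b x54))) = (m (m b x54) (m a (p x54 (m b x54))))"
  by (metis k2_f1408 k2_f66891 cp cm ina inb inc)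
lemma k2_f69239: "\<And>x95. x95\<in>A \<Longrightarrow> (p (m a x95) (m b x95)) = (p (p (m a x95) (m a x95)) (p (m a x95) (m b x95)))"
  by (metis k2_f275 k2_f66891 cp cm ina inb inc)
lemma k2_f69294: "\<And>x54. x54\<in>A \<Longrightarrow> (p (m a x54) (m b x54)) = (m (m b x54) (p (m a x54) (m b x54)))"
  by (metis k2_f141 k2_f69141 cp cm ina inb inc)
lemma k2_f69295: "\<And>x54. x54\<in>A \<Longrightarrow> (m (p a b) x54) = (m (m b x54) (m (p a b) x54))"
  by (metis dr k2_f69294 cp cm ina inb inc)
lemma k2_f69296: "\<And>x54. x54\<in>A \<Longrightarrow> (m b x54) = (m (p a b) x54)"
  by (metis k2_f51581 k2_f69295 cp cm ina inb inc)
lemma k2_f69769: "\<And>x95. x95\<in>A \<Longrightarrow> (m (p a b) x95) = (p (p (m a x95) (m a x95)) (m (p a b) x95))"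
  by (metis dr k2_f69239 cp cm ina inb inc)
lemma k2_f69770: "\<And>x95. x95\<in>A \<Longrightarrow> (m b x95) = (p (p (m a x95) (m a x95)) (m b x95))"
  by (metis k2_f69296 k2_f69769 cp cm ina inb inc)
lemma k2_f69771: "\<And>x95. x95\<in>A \<Longrightarrow> (m b x95) = (p (m a x95) (m b x95))"
  by (metis k2_f69770 pi cp cm ina inb inc)
lemma k2_f72469: "\<And>x8 x7. x8\<in>A \<Longrightarrow> x7\<in>A \<Longrightarrow> (p (m (p x8 a) x7) (m b x7)) = (p (m x8 x7) (m b x7))"
  by (metis k2_f180 k2_f69771 cp cm ina inb inc)
lemma k2_f72629: "\<And>x8 x7. x8\<in>A \<Longrightarrow> x7\<in>A \<Longrightarrow> (p (m (p x8 a) x7) (m b x7)) = (m (p x8 b) x7)"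
  by (metis dr k2_f72469 cp cm ina inb inc)
lemma k2_f138555: "\<And>x395 x394 x393. x395\<in>A \<Longrightarrow> x394\<in>A \<Longrightarrow> x393\<in>A \<Longrightarrow> (m x395 (m x393 (m b x394))) = (m (m x395 (m x393 a)) (m x393 (m b x394)))"
  by (metis k2_f10060 k2_f19829 cp cm ina inb inc)
lemma k2_f198887: "\<And>x10 x8 x9. x10\<in>A \<Longrightarrow> x8\<in>A \<Longrightarrow> x9\<in>A \<Longrightarrow> (m x10 x8) = (p (m x10 x8) (m x10 (m x8 (m x9 x8))))"
  by (metis k2_f2562 k2_f554 cp cm ina inb inc)
lemma k2_f199066: "\<And>x11 x12 x13. x11\<in>A \<Longrightarrow> x12\<in>A \<Longrightarrow> x13\<in>A \<Longrightarrow> (m x11 x12) = (m x11 (m x12 (m (p x11 x13) x12)))"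
  by (metis k2_f198887 k2_f211 cp cm ina inb inc)
lemma k2_f199365: "\<And>x101 x102 x103. x101\<in>A \<Longrightarrow> x102\<in>A \<Longrightarrow> x103\<in>A \<Longrightarrow> (m (m x101 (m x102 x101)) x103) = (m (m x101 (m x102 x101)) (m x103 (m x101 x103)))"
  by (metis k2_f199066 k2_f548 cp cm ina inb inc)
lemma k2_f199387: "\<And>x11. x11\<in>A \<Longrightarrow> (m (m a (m x11 a)) x11) = (m (m a (m x11 a)) (m x11 (m b x11)))"
  by (metis k2_f199066 k2_f59164 cp cm ina inb inc)
lemma k2_f200007: "\<And>x101 x102 x103. x101\<in>A \<Longrightarrow> x102\<in>A \<Longrightarrow> x103\<in>A \<Longrightarrow> (m (m x101 (m x102 x101)) x103) = (m x101 (m x102 (m x101 x103)))"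
  by (metis k2_f199365 k2_f51750 cp cm ina inb inc)
lemma k2_f200023: "\<And>x11. x11\<in>A \<Longrightarrow> (m a (m x11 (m b x11))) = (m (m a (m x11 a)) x11)"
  by (metis k2_f138555 k2_f199387 cp cm ina inb inc)
lemma k2_f200024: "\<And>x11. x11\<in>A \<Longrightarrow> (m a (m x11 (m a x11))) = (m a (m x11 (m b x11)))"
  by (metis k2_f200007 k2_f200023 cp cm ina inb inc)
lemma k2_f200025: "\<And>x11. x11\<in>A \<Longrightarrow> (m b x11) = (m a (m x11 (m a x11)))"
  by (metis k2_f200024 k2_f65823 cp cm ina inb inc)
lemma k2_f200026: "\<And>x11. x11\<in>A \<Longrightarrow> (m a x11) = (m b x11)"
  by (metis k2_f200025 k2_f43 cp cm ina inb inc)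
lemma k2_f200533: "\<And>x8 x7. x8\<in>A \<Longrightarrow> x7\<in>A \<Longrightarrow> (m (p x8 b) x7) = (p (m (p x8 a) x7) (m a x7))"
  by (metis k2_f200026 k2_f72629 cp cm ina inb inc)
lemma k2_f201715: "\<And>x8 x7. x8\<in>A \<Longrightarrow> x7\<in>A \<Longrightarrow> (m (p x8 a) x7) = (m (p x8 b) x7)"
  by (metis k2_f200533 k2_f7940 cp cm ina inb inc)
lemma k2_f208241: "\<And>x78. x78\<in>A \<Longrightarrow> (p x78 b) = (m (p x78 a) (p x78 b))"
  by (metis k2_f201715 mi cp cm ina inb inc)

lemma k2_goal: "m (p c a) (p c b) = p c b" by (metis k2_f208241 cp cm ina inb inc)
end

lemma congR:
  assumes "a\<in>A" "b\<in>A" "c\<in>A" "m a b = b" "m b a = a"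
  shows "m (p a c) (p b c) = p b c \<and> m (p b c) (p a c) = p a c \<and>
         m (p c a) (p c b) = p c b \<and> m (p c b) (p c a) = p c a \<and>
         m (m a c) (m b c) = m b c \<and> m (m b c) (m a c) = m a c \<and>
         m (m c a) (m c b) = m c b \<and> m (m c b) (m c a) = m c a"
  using k1_goal[OF assms] k1_goal[OF assms(2,1,3,5,4)]
    k2_goal[OF assms] k2_goal[OF assms(2,1,3,5,4)]
    c1_goal[OF assms] c1_goal[OF assms(2,1,3,5,4)]
    k0_goal[OF assms] k0_goal[OF assms(2,1,3,5,4)] by blast

lemma VLq:
  assumes x: "x\<in>A" and y: "y\<in>A"
  shows "m x (p (p (m x y) x) (m x y)) = p (p (m x y) x) (m x y) \<and> m (p (p (m x y) x) (m x y)) x = x"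
proof
  have xy: "m x y \<in> A" using cm x y .
  have e: "m x (m x y) = m x y" using ma[OF x x y] mi[OF x] by simp
  show "m x (p (p (m x y) x) (m x y)) = p (p (m x y) x) (m x y)"
    using dl[OF x cp[OF xy x] xy] dl[OF x xy x] e mi[OF x] by simp
  show "m (p (p (m x y) x) (m x y)) x = x"
    using dr[OF cp[OF xy x] xy x] dr[OF xy x x] mi[OF x] vd[OF x y] by simp
qed

end

lemma vdloc_dual:
  assumes "vdloc A p m" shows "vdloc A p (\<lambda>x y. m y x)"
proof -
  interpret vdloc A p m by (rule assms)
  show ?thesis
  proof (unfold_locales)
    fix x y z assume x: "x\<in>A" and y: "y\<in>A" and z: "z\<in>A"
    show "p x y \<in> A" using cp x y .
    show "m y x \<in> A" using cm y x .
    show "p (p x y) z = p x (p y z)" using pa x y z .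
    show "m z (m y x) = m (m z y) x" using ma z y x by simp
    show "p x x = x" using pi x .
    show "m x x = x" using mi x .
    show "m (p y z) x = p (m y x) (m z x)" using dr y z x .
    show "m z (p x y) = p (m z x) (m z y)" using dl z x y .
    show "x = p (p (m x (m y x)) x) (m x (m y x))" using vd[OF x y] ma[OF x y x] by simp
  qed
qed


instance sterm :: countable by countable_datatype

abbreviation "vX \<equiv> Var 0"
abbreviation "vY \<equiv> Var 1"
abbreviation "vZ \<equiv> Var 2"

definition ISax :: "(sterm \<times> sterm) set" where
  "ISax = {(Add (Add vX vY) vZ, Add vX (Add vY vZ)), (Mul (Mul vX vY) vZ, Mul vX (Mul vY vZ)),
           (Add vX vX, vX), (Mul vX vX, vX),
           (Mul vX (Add vY vZ), Add (Mul vX vY) (Mul vX vZ)),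
           (Mul (Add vX vY) vZ, Add (Mul vX vZ) (Mul vY vZ))}"

definition "VLeq = (vX, Add (Add (Mul vX vY) vX) (Mul vX vY))"
definition "VReq = (vX, Add (Add (Mul vY vX) vX) (Mul vY vX))"
definition "VDeq = (vX, Add (Add (Mul (Mul vX vY) vX) vX) (Mul (Mul vX vY) vX))"

definition v3 :: "'a \<Rightarrow> 'a \<Rightarrow> 'a \<Rightarrow> nat \<Rightarrow> 'a" where
  "v3 x y z = (\<lambda>i. if i = 0 then x else if i = 1 then y else z)"

lemma v3_in: "x\<in>A \<Longrightarrow> y\<in>A \<Longrightarrow> z\<in>A \<Longrightarrow> v3 x y z i \<in> A"
  by (simp add: v3_def)

lemma sat_ax_iff:
  "(\<forall>e\<in>insert E ISax. sat (A,p,m) e) \<longleftrightarrow>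
   sat (A,p,m) E \<and> (\<forall>x\<in>A. \<forall>y\<in>A. \<forall>z\<in>A.
        p (p x y) z = p x (p y z) \<and> m (m x y) z = m x (m y z) \<and>
        p x x = x \<and> m x x = x \<and>
        m x (p y z) = p (m x y) (m x z) \<and> m (p x y) z = p (m x z) (m y z))"
proof
  assume H: "\<forall>e\<in>insert E ISax. sat (A,p,m) e"
  show "sat (A,p,m) E \<and> (\<forall>x\<in>A. \<forall>y\<in>A. \<forall>z\<in>A.
        p (p x y) z = p x (p y z) \<and> m (m x y) z = m x (m y z) \<and>
        p x x = x \<and> m x x = x \<and>
        m x (p y z) = p (m x y) (m x z) \<and> m (p x y) z = p (m x z) (m y z))"
  proof (intro conjI ballI)
    show "sat (A,p,m) E" using H by simp
    fix x y z assume xyz: "x\<in>A" "y\<in>A" "z\<in>A"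
    have V: "\<forall>i. v3 x y z i \<in> A" using v3_in[OF xyz] by blast
    have S: "\<And>e. e \<in> ISax \<Longrightarrow> eval p m (v3 x y z) (fst e) = eval p m (v3 x y z) (snd e)"
      using H V unfolding sat_def by auto
    show "p (p x y) z = p x (p y z)" using S[of "(Add (Add vX vY) vZ, Add vX (Add vY vZ))"]
      by (simp add: ISax_def v3_def)
    show "m (m x y) z = m x (m y z)" using S[of "(Mul (Mul vX vY) vZ, Mul vX (Mul vY vZ))"]
      by (simp add: ISax_def v3_def)
    show "p x x = x" using S[of "(Add vX vX, vX)"] by (simp add: ISax_def v3_def)
    show "m x x = x" using S[of "(Mul vX vX, vX)"] by (simp add: ISax_def v3_def)
    show "m x (p y z) = p (m x y) (m x z)" using S[of "(Mul vX (Add vY vZ), Add (Mul vX vY) (Mul vX vZ))"]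
      by (simp add: ISax_def v3_def)
    show "m (p x y) z = p (m x z) (m y z)" using S[of "(Mul (Add vX vY) vZ, Add (Mul vX vZ) (Mul vY vZ))"]
      by (simp add: ISax_def v3_def)
  qed
next
  assume H: "sat (A,p,m) E \<and> (\<forall>x\<in>A. \<forall>y\<in>A. \<forall>z\<in>A.
        p (p x y) z = p x (p y z) \<and> m (m x y) z = m x (m y z) \<and>
        p x x = x \<and> m x x = x \<and>
        m x (p y z) = p (m x y) (m x z) \<and> m (p x y) z = p (m x z) (m y z))"
  then have H1: "sat (A,p,m) E" and H2: "\<And>x y z. x\<in>A \<Longrightarrow> y\<in>A \<Longrightarrow> z\<in>A \<Longrightarrow>
        p (p x y) z = p x (p y z) \<and> m (m x y) z = m x (m y z) \<and>
        p x x = x \<and> m x x = x \<and>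
        m x (p y z) = p (m x y) (m x z) \<and> m (p x y) z = p (m x z) (m y z)" by blast+
  have H3: "\<And>x. x\<in>A \<Longrightarrow> p x x = x \<and> m x x = x" using H2 by blast
  have "sat (A,p,m) e" if "e \<in> ISax" for e
    using that unfolding ISax_def sat_def
    by (auto simp: H2 H3)
  then show "\<forall>e\<in>insert E ISax. sat (A,p,m) e" using H1 by blast
qed

lemma sat_eq_iff:
  assumes "\<And>v. eval p m v (fst E) = f (v 0) (v 1)" "\<And>v. eval p m v (snd E) = g (v 0) (v 1)"
  shows "sat (A,p,m) E \<longleftrightarrow> (\<forall>x\<in>A. \<forall>y\<in>A. f x y = g x y)"
proof
  assume "sat (A,p,m) E"
  then have S: "\<And>v. (\<forall>i. v i \<in> A) \<Longrightarrow> eval p m v (fst E) = eval p m v (snd E)"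
    unfolding sat_def by simp
  show "\<forall>x\<in>A. \<forall>y\<in>A. f x y = g x y"
  proof (intro ballI)
    fix x y assume x: "x\<in>A" and y: "y\<in>A"
    have "\<forall>i. v3 x y x i \<in> A" using v3_in[OF x y x] by blast
    then have "eval p m (v3 x y x) (fst E) = eval p m (v3 x y x) (snd E)" by (rule S)
    then show "f x y = g x y" using assms[of "v3 x y x"] by (simp add: v3_def)
  qed
next
  assume "\<forall>x\<in>A. \<forall>y\<in>A. f x y = g x y"
  then show "sat (A,p,m) E" unfolding sat_def using assms by auto
qed

lemma VL_iff: "VL (A,p,m) \<longleftrightarrow> alg_closed (A,p,m) \<and> (\<forall>e\<in>insert VLeq ISax. sat (A,p,m) e)"
proof -
  have "sat (A,p,m) VLeq \<longleftrightarrow> (\<forall>x\<in>A. \<forall>y\<in>A. x = p (p (m x y) x) (m x y))"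
    by (rule sat_eq_iff) (simp_all add: VLeq_def)
  then show ?thesis unfolding sat_ax_iff VL_def idem_semiring_def by auto
qed

lemma VR_iff: "VR (A,p,m) \<longleftrightarrow> alg_closed (A,p,m) \<and> (\<forall>e\<in>insert VReq ISax. sat (A,p,m) e)"
proof -
  have "sat (A,p,m) VReq \<longleftrightarrow> (\<forall>x\<in>A. \<forall>y\<in>A. x = p (p (m y x) x) (m y x))"
    by (rule sat_eq_iff) (simp_all add: VReq_def)
  then show ?thesis unfolding sat_ax_iff VR_def idem_semiring_def by auto
qed

lemma VD_iff: "VD (A,p,m) \<longleftrightarrow> alg_closed (A,p,m) \<and> (\<forall>e\<in>insert VDeq ISax. sat (A,p,m) e)"
proof -
  have "sat (A,p,m) VDeq \<longleftrightarrow> (\<forall>x\<in>A. \<forall>y\<in>A. x = p (p (m (m x y) x) x) (m (m x y) x))"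
    by (rule sat_eq_iff) (simp_all add: VDeq_def)
  then show ?thesis unfolding sat_ax_iff VD_def idem_semiring_def by auto
qed

lemma VL_VD: "VL S \<Longrightarrow> VD S"
proof -
  assume H: "VL S"
  obtain A p m where S: "S = (A,p,m)" by (cases S) auto
  have I: "idem_semiring (A,p,m)" and L: "\<forall>x\<in>A. \<forall>y\<in>A. x = p (p (m x y) x) (m x y)"
    using H unfolding S VL_def by auto
  have "\<forall>x\<in>A. \<forall>y\<in>A. x = p (p (m (m x y) x) x) (m (m x y) x)"
  proof (intro ballI)
    fix x y assume x: "x\<in>A" and y: "y\<in>A"
    have yx: "m y x \<in> A" using I y x unfolding idem_semiring_def alg_closed_def by auto
    have "m (m x y) x = m x (m y x)" using I x y unfolding idem_semiring_def by auto
    then show "x = p (p (m (m x y) x) x) (m (m x y) x)" using L x yx by auto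
  qed
  then show "VD S" using I unfolding S VD_def by auto
qed

lemma VR_VD: "VR S \<Longrightarrow> VD S"
proof -
  assume H: "VR S"
  obtain A p m where S: "S = (A,p,m)" by (cases S) auto
  have I: "idem_semiring (A,p,m)" and L: "\<forall>x\<in>A. \<forall>y\<in>A. x = p (p (m y x) x) (m y x)"
    using H unfolding S VR_def by auto
  have "\<forall>x\<in>A. \<forall>y\<in>A. x = p (p (m (m x y) x) x) (m (m x y) x)"
  proof (intro ballI)
    fix x y assume x: "x\<in>A" and y: "y\<in>A"
    have xy: "m x y \<in> A" using I y x unfolding idem_semiring_def alg_closed_def by auto
    then show "x = p (p (m (m x y) x) x) (m (m x y) x)" using L x xy by auto
  qed
  then show "VD S" using I unfolding S VD_def by auto
qed


lemma nat_copy: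
  fixes C :: "'a set"
  assumes cC: "countable C" and cl: "alg_closed (C,P,M)"
  shows "\<exists>N::nat alg. alg_closed N \<and> (\<forall>e. sat N e \<longleftrightarrow> sat (C,P,M) e)"
proof -
  define f where "f = to_nat_on C"
  have inj: "inj_on f C" unfolding f_def using cC by (rule inj_on_to_nat_on)
  define g where "g = inv_into C f"
  have gf: "\<And>x. x \<in> C \<Longrightarrow> g (f x) = x" unfolding g_def using inj by simp
  have clC: "\<And>x y. x\<in>C \<Longrightarrow> y\<in>C \<Longrightarrow> P x y \<in> C \<and> M x y \<in> C"
    using cl unfolding alg_closed_def by auto
  define P' where "P' = (\<lambda>a b. f (P (g a) (g b)))"
  define M' where "M' = (\<lambda>a b. f (M (g a) (g b)))"
  have hom: "\<And>w::nat \<Rightarrow> 'a. (\<forall>i. w i \<in> C) \<Longrightarrow> eval P' M' (f \<circ> w) t = f (eval P M w t) \<and> eval P M w t \<in> C" for t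
    by (induction t) (auto simp: P'_def M'_def gf clC)
  have ncl: "alg_closed (f ` C, P', M')"
    unfolding alg_closed_def P'_def M'_def using gf clC by auto
  have SE: "sat (f ` C, P', M') e \<longleftrightarrow> sat (C,P,M) e" for e
  proof
    assume H: "sat (f ` C, P', M') e"
    show "sat (C,P,M) e" unfolding sat_def
    proof (simp, intro allI impI)
      fix w :: "nat \<Rightarrow> 'a" assume w: "\<forall>i. w i \<in> C"
      have "\<forall>i. (f \<circ> w) i \<in> f ` C" using w by auto
      then have "eval P' M' (f \<circ> w) (fst e) = eval P' M' (f \<circ> w) (snd e)"
        using H unfolding sat_def by auto
      then have "f (eval P M w (fst e)) = f (eval P M w (snd e))" using hom[OF w] by metis
      then show "eval P M w (fst e) = eval P M w (snd e)"
        using inj hom[OF w] by (meson inj_onD)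
    qed
  next
    assume H: "sat (C,P,M) e"
    show "sat (f ` C, P', M') e" unfolding sat_def
    proof (simp, intro allI impI)
      fix u :: "nat \<Rightarrow> nat" assume u: "\<forall>i. u i \<in> f ` C"
      define w where "w = g \<circ> u"
      have w: "\<forall>i. w i \<in> C" using u unfolding w_def g_def by (auto intro: inv_into_into)
      have fw: "f \<circ> w = u" using u unfolding w_def g_def by (auto simp: fun_eq_iff f_inv_into_f)
      have "eval P M w (fst e) = eval P M w (snd e)" using H w unfolding sat_def by auto
      then show "eval P' M' u (fst e) = eval P' M' u (snd e)"
        using hom[OF w] fw by metis
    qed
  qed
  show ?thesis
    by (rule exI[where x="(f ` C, P', M')"]) (use ncl SE in simp)
qed

lemma quot:
  fixes B :: "'a set" and E :: "'a \<Rightarrow> 'a \<Rightarrow> bool"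
  assumes cl: "\<And>x y. x\<in>B \<Longrightarrow> y\<in>B \<Longrightarrow> p x y \<in> B \<and> m x y \<in> B"
  and rf: "\<And>x. x\<in>B \<Longrightarrow> E x x" and sy: "\<And>x y. E x y \<Longrightarrow> E y x"
  and tr: "\<And>x y z. E x y \<Longrightarrow> E y z \<Longrightarrow> E x z"
  and cg: "\<And>x y z. x\<in>B \<Longrightarrow> y\<in>B \<Longrightarrow> z\<in>B \<Longrightarrow> E x y \<Longrightarrow>
             E (p x z) (p y z) \<and> E (p z x) (p z y) \<and> E (m x z) (m y z) \<and> E (m z x) (m z y)"
  and rep_def: "rep = (\<lambda>x. SOME y. y\<in>B \<and> E x y)"
  shows "alg_closed (rep ` B, \<lambda>a b. rep (p a b), \<lambda>a b. rep (m a b))"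
    and "\<And>e. (\<forall>w. (\<forall>i. w i \<in> B) \<longrightarrow> E (eval p m w (fst e)) (eval p m w (snd e)))
            \<Longrightarrow> sat (rep ` B, \<lambda>a b. rep (p a b), \<lambda>a b. rep (m a b)) e"
    and "\<And>e w. sat (rep ` B, \<lambda>a b. rep (p a b), \<lambda>a b. rep (m a b)) e \<Longrightarrow> (\<forall>i. w i \<in> B)
            \<Longrightarrow> E (eval p m w (fst e)) (eval p m w (snd e))"
proof -
  have r1: "x\<in>B \<Longrightarrow> rep x \<in> B \<and> E x (rep x)" for x
    unfolding rep_def by (rule someI[of "\<lambda>y. y\<in>B \<and> E x y" x]) (simp add: rf)
  have r2: "E x y \<Longrightarrow> rep x = rep y" for x y
  proof -
    assume "E x y"
    then have "E x z \<longleftrightarrow> E y z" for z using sy tr by metis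
    then have "(\<lambda>z. z\<in>B \<and> E x z) = (\<lambda>z. z\<in>B \<and> E y z)" by (simp add: fun_eq_iff)
    then show ?thesis unfolding rep_def by simp
  qed
  define P where "P = (\<lambda>a b. rep (p a b))"
  define M where "M = (\<lambda>a b. rep (m a b))"
  have cg2: "E (p a b) (p a' b') \<and> E (m a b) (m a' b')" if "a\<in>B" "b\<in>B" "a'\<in>B" "b'\<in>B" "E a a'" "E b b'" for a b a' b'
  proof -
    have "E (p a b) (p a' b)" "E (p a' b) (p a' b')" "E (m a b) (m a' b)" "E (m a' b) (m a' b')"
      using cg[OF that(1,3,2,5)] cg[OF that(2,4,3,6)] by auto
    then show ?thesis using tr by blast
  qed
  have hom: "\<And>w. (\<forall>i. w i \<in> B) \<Longrightarrow> eval P M (\<lambda>i. rep (w i)) t = rep (eval p m w t) \<and> eval p m w t \<in> B" for t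
  proof (induction t)
    case (Var i) then show ?case by simp
  next
    case (Add s t)
    then have IH: "eval P M (\<lambda>i. rep (w i)) s = rep (eval p m w s)" "eval p m w s \<in> B"
        "eval P M (\<lambda>i. rep (w i)) t = rep (eval p m w t)" "eval p m w t \<in> B" by auto
    have "E (p (eval p m w s) (eval p m w t)) (p (rep (eval p m w s)) (rep (eval p m w t)))"
      using cg2 IH r1 by blast
    then show ?case using IH r2 cl by (simp add: P_def)
  next
    case (Mul s t)
    then have IH: "eval P M (\<lambda>i. rep (w i)) s = rep (eval p m w s)" "eval p m w s \<in> B"
        "eval P M (\<lambda>i. rep (w i)) t = rep (eval p m w t)" "eval p m w t \<in> B" by auto
    have "E (m (eval p m w s) (eval p m w t)) (m (rep (eval p m w s)) (rep (eval p m w t)))"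
      using cg2 IH r1 by blast
    then show ?case using IH r2 cl by (simp add: M_def)
  qed
  show "alg_closed (rep ` B, \<lambda>a b. rep (p a b), \<lambda>a b. rep (m a b))"
    unfolding alg_closed_def using r1 cl by auto
  show "sat (rep ` B, \<lambda>a b. rep (p a b), \<lambda>a b. rep (m a b)) e"
    if H: "\<forall>w. (\<forall>i. w i \<in> B) \<longrightarrow> E (eval p m w (fst e)) (eval p m w (snd e))" for e
    unfolding sat_def
  proof (simp, intro allI impI)
    fix u :: "nat \<Rightarrow> 'a" assume u: "\<forall>i. u i \<in> rep ` B"
    define w where "w = (\<lambda>i. SOME x. x\<in>B \<and> u i = rep x)"
    have w: "\<forall>i. w i \<in> B \<and> u i = rep (w i)"
    proof
      fix i
      obtain x where "x\<in>B" "u i = rep x" using u by blast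
      then show "w i \<in> B \<and> u i = rep (w i)"
        using someI[of "\<lambda>x. x\<in>B \<and> u i = rep x" x] unfolding w_def by blast
    qed
    have rw: "(\<lambda>i. rep (w i)) = u" using w by (auto simp: fun_eq_iff)
    have "E (eval p m w (fst e)) (eval p m w (snd e))" using H w by blast
    then have "rep (eval p m w (fst e)) = rep (eval p m w (snd e))" by (rule r2)
    then show "eval (\<lambda>a b. rep (p a b)) (\<lambda>a b. rep (m a b)) u (fst e) =
               eval (\<lambda>a b. rep (p a b)) (\<lambda>a b. rep (m a b)) u (snd e)"
      using hom[of w] w rw unfolding P_def M_def by metis
  qed
  show "E (eval p m w (fst e)) (eval p m w (snd e))"
    if H: "sat (rep ` B, \<lambda>a b. rep (p a b), \<lambda>a b. rep (m a b)) e" and w: "\<forall>i. w i \<in> B" for e w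
  proof -
    have "\<forall>i. (\<lambda>i. rep (w i)) i \<in> rep ` B" using w by auto
    then have "eval P M (\<lambda>i. rep (w i)) (fst e) = eval P M (\<lambda>i. rep (w i)) (snd e)"
      using H unfolding sat_def P_def M_def by auto
    then have eq: "rep (eval p m w (fst e)) = rep (eval p m w (snd e))" using hom[OF w] by metis
    have "E (eval p m w (fst e)) (rep (eval p m w (fst e)))" "E (eval p m w (snd e)) (rep (eval p m w (snd e)))"
      using r1 hom[OF w] by auto
    then show ?thesis using eq sy tr by metis
  qed
qed

lemma eval_in:
  fixes w :: "nat \<Rightarrow> 'a"
  assumes "\<And>x y. x\<in>B \<Longrightarrow> y\<in>B \<Longrightarrow> p x y \<in> B \<and> m x y \<in> B" "\<forall>i. w i \<in> B"
  shows "eval p m w t \<in> B"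
  using assms by (induction t) auto

lemma quot_theory:
  fixes B :: "'a set" and E :: "'a \<Rightarrow> 'a \<Rightarrow> bool" and K :: "nat alg \<Rightarrow> bool" and v :: "nat \<Rightarrow> 'a"
  assumes K_iff: "\<And>(C::nat set) P M. alg_closed (C,P,M) \<Longrightarrow> (\<forall>e\<in>insert Keq ISax. sat (C,P,M) e) \<Longrightarrow> K (C,P,M)"
  and cl: "\<And>x y. x\<in>B \<Longrightarrow> y\<in>B \<Longrightarrow> p x y \<in> B \<and> m x y \<in> B"
  and cB: "countable B"
  and rf: "\<And>x. x\<in>B \<Longrightarrow> E x x" and sy: "\<And>x y. E x y \<Longrightarrow> E y x"
  and tr: "\<And>x y z. E x y \<Longrightarrow> E y z \<Longrightarrow> E x z"
  and cg: "\<And>x y z. x\<in>B \<Longrightarrow> y\<in>B \<Longrightarrow> z\<in>B \<Longrightarrow> E x y \<Longrightarrow>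
             E (p x z) (p y z) \<and> E (p z x) (p z y) \<and> E (m x z) (m y z) \<and> E (m z x) (m z y)"
  and Kq: "\<And>w::nat \<Rightarrow> 'a. (\<forall>i. w i \<in> B) \<Longrightarrow> E (eval p m w (fst Keq)) (eval p m w (snd Keq))"
  and ISq: "\<And>e (w::nat \<Rightarrow> 'a). e\<in>ISax \<Longrightarrow> (\<forall>i. w i \<in> B) \<Longrightarrow> eval p m w (fst e) = eval p m w (snd e)"
  and eK: "e \<in> eq_theory K" and v: "\<forall>i. v i \<in> B"
  shows "E (eval p m v (fst e)) (eval p m v (snd e))"
proof -
  define rep where "rep = (\<lambda>x. SOME y. y\<in>B \<and> E x y)"
  let ?Q = "(rep ` B, \<lambda>a b. rep (p a b), \<lambda>a b. rep (m a b))"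
  have Q1: "alg_closed ?Q" by (rule quot(1)[OF cl rf sy tr cg rep_def])
  have Q2: "sat ?Q e" if "\<forall>w. (\<forall>i. w i \<in> B) \<longrightarrow> E (eval p m w (fst e)) (eval p m w (snd e))" for e
    by (rule quot(2)[OF cl rf sy tr cg rep_def that])
  have Q3: "E (eval p m w (fst e)) (eval p m w (snd e))" if "sat ?Q e" "\<forall>i. w i \<in> B" for e and w :: "nat \<Rightarrow> 'a"
    by (rule quot(3)[OF cl rf sy tr cg rep_def that])
  have satQ: "\<forall>e\<in>insert Keq ISax. sat ?Q e"
  proof
    fix e assume e: "e \<in> insert Keq ISax"
    show "sat ?Q e"
    proof (rule Q2, intro allI impI)
      fix w :: "nat \<Rightarrow> 'a" assume w: "\<forall>i. w i \<in> B"
      show "E (eval p m w (fst e)) (eval p m w (snd e))"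
      proof (cases "e = Keq")
        case True then show ?thesis using Kq[OF w] by simp
      next
        case False
        then have eI: "e \<in> ISax" using e by simp
        have "eval p m w (fst e) = eval p m w (snd e)" using ISq[OF eI w] .
        then show ?thesis using rf[OF eval_in[OF cl w, where t="snd e"]] by simp
      qed
    qed
  qed
  have "countable (rep ` B)" using cB by simp
  then obtain N :: "nat alg" where N: "alg_closed N" "\<And>e. sat N e \<longleftrightarrow> sat ?Q e"
    using nat_copy[OF _ Q1] by blast
  obtain C P M where NC: "N = (C,P,M)" by (cases N) auto
  have "K N" unfolding NC by (rule K_iff) (use N satQ NC in auto)
  then have "sat N e" using eK unfolding eq_theory_def by blast
  then have "sat ?Q e" using N by blast
  then show ?thesis using Q3 v by blast
qed

lemma VD_loc:
  assumes "VD (A,p,m)" shows "vdloc A p m"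
proof -
  have H: "\<forall>x\<in>A. \<forall>y\<in>A. p x y \<in> A \<and> m x y \<in> A"
    "\<forall>x\<in>A. \<forall>y\<in>A. \<forall>z\<in>A.
        p (p x y) z = p x (p y z) \<and> m (m x y) z = m x (m y z) \<and>
        p x x = x \<and> m x x = x \<and>
        m x (p y z) = p (m x y) (m x z) \<and> m (p x y) z = p (m x z) (m y z)"
    "\<forall>x\<in>A. \<forall>y\<in>A. x = p (p (m (m x y) x) x) (m (m x y) x)"
    using assms unfolding VD_def idem_semiring_def alg_closed_def by auto
  show ?thesis
    by unfold_locales (use H in blast)+
qed

theorem corollary4p10:
  fixes S :: "'a alg"
  shows "VD S \<longleftrightarrow> join_variety VL VR S"
proof -
  obtain A p m where S: "S = (A,p,m)" by (cases S) auto
  show ?thesis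
  proof
    assume H: "join_variety VL VR S"
    have cl: "alg_closed (A,p,m)" using H unfolding S join_variety_def by blast
    have "\<forall>e\<in>insert VDeq ISax. e \<in> eq_theory VL \<inter> eq_theory VR"
    proof
      fix e assume e: "e \<in> insert VDeq ISax"
      have "sat N e" if "VD N" for N :: "nat alg"
      proof -
        obtain C P M where N: "N = (C,P,M)" by (cases N) auto
        show ?thesis using that e unfolding N VD_iff by blast
      qed
      then show "e \<in> eq_theory VL \<inter> eq_theory VR"
        unfolding eq_theory_def using VL_VD VR_VD by blast
    qed
    then have "\<forall>e\<in>insert VDeq ISax. sat (A,p,m) e" using H unfolding S join_variety_def by blast
    then show "VD S" unfolding S VD_iff using cl by blast
  next
    assume H: "VD S"
    have VDA: "VD (A,p,m)" using H S by simp
    have loc: "vdloc A p m" using VD_loc[OF VDA] .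
    have dloc: "vdloc A p (\<lambda>x y. m y x)" using vdloc_dual[OF loc] .
    have clA: "\<And>x y. x\<in>A \<Longrightarrow> y\<in>A \<Longrightarrow> p x y \<in> A \<and> m x y \<in> A"
      using vdloc.cp[OF loc] vdloc.cm[OF loc] by simp
    have clS: "alg_closed (A,p,m)" using VDA unfolding VD_iff by blast
    have ISS: "\<forall>e\<in>ISax. sat (A,p,m) e" using VDA unfolding VD_iff by blast
    have "sat (A,p,m) e" if eL: "e \<in> eq_theory VL" and eR: "e \<in> eq_theory VR" for e
      unfolding sat_def
    proof (simp, intro allI impI)
      fix v :: "nat \<Rightarrow> 'a" assume vA: "\<forall>i. v i \<in> A"
      define B where "B = range (eval p m v)"
      have clB: "\<And>x y. x\<in>B \<Longrightarrow> y\<in>B \<Longrightarrow> p x y \<in> B \<and> m x y \<in> B"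
      proof -
        fix x y assume "x\<in>B" "y\<in>B"
        then obtain s t where "x = eval p m v s" "y = eval p m v t" unfolding B_def by blast
        then have "p x y = eval p m v (Add s t)" "m x y = eval p m v (Mul s t)" by simp_all
        then show "p x y \<in> B \<and> m x y \<in> B" unfolding B_def by blast
      qed
      have BA: "B \<subseteq> A" unfolding B_def using eval_in[where B=A and p=p and m=m, OF clA vA] by auto
      have cB: "countable B" unfolding B_def by simp
      have vB: "\<forall>i. v i \<in> B"
      proof
        fix i have "v i = eval p m v (Var i)" by simp
        then show "v i \<in> B" unfolding B_def by blast
      qed
      have ISq: "eval p m w (fst e) = eval p m w (snd e)" if eI: "e\<in>ISax" and wB: "\<forall>i. w i \<in> B" for e and w :: "nat \<Rightarrow> 'a"
      proof -
        have "sat (A,p,m) e" using ISS eI by blast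
        then have S: "\<forall>v. (\<forall>i. v i \<in> A) \<longrightarrow> eval p m v (fst e) = eval p m v (snd e)"
          unfolding sat_def by simp
        have "\<forall>i. w i \<in> A" using wB BA by blast
        then show ?thesis using S by blast
      qed
      define E1 where "E1 = (\<lambda>x y. x\<in>A \<and> y\<in>A \<and> m x y = y \<and> m y x = x)"
      define E2 where "E2 = (\<lambda>x y. x\<in>A \<and> y\<in>A \<and> m x y = x \<and> m y x = y)"
      have r1: "E1 (eval p m v (fst e)) (eval p m v (snd e))"
      proof (rule quot_theory[where K=VL and Keq=VLeq, OF _ clB cB _ _ _ _ _ ISq eL vB])
        show "\<And>(C::nat set) P M. alg_closed (C,P,M) \<Longrightarrow> (\<forall>e\<in>insert VLeq ISax. sat (C,P,M) e) \<Longrightarrow> VL (C,P,M)"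
          using VL_iff by blast
        show "\<And>x. x\<in>B \<Longrightarrow> E1 x x" unfolding E1_def using BA vdloc.mi[OF loc] by blast
        show "\<And>x y. E1 x y \<Longrightarrow> E1 y x" unfolding E1_def by blast
        show "\<And>x y z. E1 x y \<Longrightarrow> E1 y z \<Longrightarrow> E1 x z"
        proof -
          fix x y z assume "E1 x y" "E1 y z"
          then have xyz: "x\<in>A" "y\<in>A" "z\<in>A" and h: "m x y = y" "m y x = x"
            "m y z = z" "m z y = y" unfolding E1_def by auto
          have a1: "m (m x y) z = m x (m y z)" "m (m z y) x = m z (m y x)" using vdloc.ma[OF loc] xyz by auto
          show "E1 x z" using a1 h xyz unfolding E1_def by auto
        qed
        show "\<And>x y z. x\<in>B \<Longrightarrow> y\<in>B \<Longrightarrow> z\<in>B \<Longrightarrow> E1 x y \<Longrightarrow>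
             E1 (p x z) (p y z) \<and> E1 (p z x) (p z y) \<and> E1 (m x z) (m y z) \<and> E1 (m z x) (m z y)"
        proof -
          fix x y z assume xyz: "x\<in>B" "y\<in>B" "z\<in>B" and "E1 x y"
          then have "x\<in>A" "y\<in>A" "z\<in>A" "m x y = y" "m y x = x" using BA unfolding E1_def by auto
          from vdloc.congR[OF loc this] show "E1 (p x z) (p y z) \<and> E1 (p z x) (p z y) \<and> E1 (m x z) (m y z) \<and> E1 (m z x) (m z y)"
            unfolding E1_def using clA \<open>x\<in>A\<close> \<open>y\<in>A\<close> \<open>z\<in>A\<close> by auto
        qed
        show "\<And>w. (\<forall>i. w i \<in> B) \<Longrightarrow> E1 (eval p m w (fst VLeq)) (eval p m w (snd VLeq))"
        proof -
          fix w :: "nat \<Rightarrow> 'a" assume w: "\<forall>i. w i \<in> B"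
          then have "w 0 \<in> A" "w 1 \<in> A" using BA by auto
          from vdloc.VLq[OF loc this] show "E1 (eval p m w (fst VLeq)) (eval p m w (snd VLeq))"
            unfolding E1_def VLeq_def using clA \<open>w 0 \<in> A\<close> \<open>w 1 \<in> A\<close> by auto
        qed
      qed
      have r2: "E2 (eval p m v (fst e)) (eval p m v (snd e))"
      proof (rule quot_theory[where K=VR and Keq=VReq, OF _ clB cB _ _ _ _ _ ISq eR vB])
        show "\<And>(C::nat set) P M. alg_closed (C,P,M) \<Longrightarrow> (\<forall>e\<in>insert VReq ISax. sat (C,P,M) e) \<Longrightarrow> VR (C,P,M)"
          using VR_iff by blast
        show "\<And>x. x\<in>B \<Longrightarrow> E2 x x" unfolding E2_def using BA vdloc.mi[OF loc] by blast
        show "\<And>x y. E2 x y \<Longrightarrow> E2 y x" unfolding E2_def by blast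
        show "\<And>x y z. E2 x y \<Longrightarrow> E2 y z \<Longrightarrow> E2 x z"
        proof -
          fix x y z assume "E2 x y" "E2 y z"
          then have xyz: "x\<in>A" "y\<in>A" "z\<in>A" and h: "m x y = x" "m y x = y"
            "m y z = y" "m z y = z" unfolding E2_def by auto
          have a1: "m (m x y) z = m x (m y z)" "m (m z y) x = m z (m y x)" using vdloc.ma[OF loc] xyz by auto
          show "E2 x z" using a1 h xyz unfolding E2_def by auto
        qed
        show "\<And>x y z. x\<in>B \<Longrightarrow> y\<in>B \<Longrightarrow> z\<in>B \<Longrightarrow> E2 x y \<Longrightarrow>
             E2 (p x z) (p y z) \<and> E2 (p z x) (p z y) \<and> E2 (m x z) (m y z) \<and> E2 (m z x) (m z y)"
        proof -
          fix x y z assume xyz: "x\<in>B" "y\<in>B" "z\<in>B" and "E2 x y"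
          then have "x\<in>A" "y\<in>A" "z\<in>A" "(\<lambda>x y. m y x) x y = y" "(\<lambda>x y. m y x) y x = x" using BA unfolding E2_def by auto
          from vdloc.congR[OF dloc this] show "E2 (p x z) (p y z) \<and> E2 (p z x) (p z y) \<and> E2 (m x z) (m y z) \<and> E2 (m z x) (m z y)"
            unfolding E2_def using clA \<open>x\<in>A\<close> \<open>y\<in>A\<close> \<open>z\<in>A\<close> by auto
        qed
        show "\<And>w. (\<forall>i. w i \<in> B) \<Longrightarrow> E2 (eval p m w (fst VReq)) (eval p m w (snd VReq))"
        proof -
          fix w :: "nat \<Rightarrow> 'a" assume w: "\<forall>i. w i \<in> B"
          then have "w 0 \<in> A" "w 1 \<in> A" using BA by auto
          from vdloc.VLq[OF dloc this] show "E2 (eval p m w (fst VReq)) (eval p m w (snd VReq))"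
            unfolding E2_def VReq_def using clA \<open>w 0 \<in> A\<close> \<open>w 1 \<in> A\<close> by auto
        qed
      qed
      have h1: "m (eval p m v (fst e)) (eval p m v (snd e)) = eval p m v (snd e)"
        using r1 unfolding E1_def by blast
      have h2: "m (eval p m v (fst e)) (eval p m v (snd e)) = eval p m v (fst e)"
        using r2 unfolding E2_def by blast
      from h2[symmetric] h1 show "eval p m v (fst e) = eval p m v (snd e)" by (rule trans)
    qed
    then show "join_variety VL VR S" unfolding S join_variety_def using clS by blast
  qed
qed
end
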